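(* Let $G$ be an oriented graph derived from a Burling tree $T$ and let $uv$ be a bottom arc of $G$ with respect to $T$. Let $G'$ be obtained from $G$ by subdividing $uv$ into $uwv$ (removing the arc $uv$ and adding a new vertex $w$ with arcs $uw$ and $wv$). Then $G'$ can be derived from a Burling tree $T'$ in such a way that, with respect to $T'$: $uw$ is a bottom arc of $G'$; $wv$ is both a bottom arc and a top arc of $G'$; every top arc of $G$ with respect to $T$ other than $uv$ is a top arc of $G'$; and every bottom arc of $G$ with respect to $T$ other than $uv$ is a bottom arc of $G'$.
   Context: Oriented graphs are finite, without loops, multiple arcs or pairs of opposite arcs. In a rooted tree $T$ with root $r$, each non-root vertex $v$ has a parent $p(v)$; children, leaves, ancestors and descendants are as usual. A branch is a sequence $v_1\dots v_k$ ($k\ge0$) with $v_i$ the parent of $v_{i+1}$; it starts at $v_1$. A Burling tree is a 4-tuple $(T,r,\ell,c)$: $T$ a rooted tree with root $r$; $\ell$ assigns to each non-leaf vertex $v$ one of its children $\ell(v)$ (the last-born of $v$); $c$ assigns to every vertex $v$ that is neither the root nor a last-born the vertex-set of a (possibly empty) branch starting at $\ell(p(v))$, and $c(v)=\emptyset$ if $v$ is the root or a last-born. The oriented graph fully derived from it has vertex-set $V(T)$ and an arc $uv$ iff $v\in c(u)$; an oriented graph is derived from the Burling tree if it is an induced subgraph of the fully derived one. If $G$ is derived from $T$ and $uv$ is an arc of $G$, then all out-neighbors of $u$ lie on one branch of $T$; $uv$ is a top arc with respect to $T$ if $v$ is the out-neighbor of $u$ closest in $T$ to the root, and a bottom arc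 with respect to $T$ if $v$ is the out-neighbor of $u$ furthest in $T$ from the root. *)

theory Defs
  imports Main
begin

text \<open>A Burling tree (T, r, l, c). The rooted tree T is given by a finite vertex set,
  a root, and a parent function (meaningful on non-root vertices).\<close>
record 'a btree =
  bV :: "'a set"
  broot :: 'a
  bpar :: "'a \<Rightarrow> 'a"
  blb :: "'a \<Rightarrow> 'a"          \<comment> \<open>last-born child of a non-leaf vertex\<close>
  bc :: "'a \<Rightarrow> 'a set"

definition rooted_tree :: "'a set \<Rightarrow> 'a \<Rightarrow> ('a \<Rightarrow> 'a) \<Rightarrow> bool" where
  "rooted_tree V r p \<longleftrightarrow> finite V \<and> r \<in> V \<and> (\<forall>v\<in>V - {r}. p v \<in> V)
     \<and> (\<forall>v\<in>V. \<exists>n. (p ^^ n) v = r)"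

definition children :: "'a btree \<Rightarrow> 'a \<Rightarrow> 'a set" where
  "children T x = {v \<in> bV T. v \<noteq> broot T \<and> bpar T v = x}"

definition is_leaf :: "'a btree \<Rightarrow> 'a \<Rightarrow> bool" where
  "is_leaf T x \<longleftrightarrow> children T x = {}"

definition anc :: "'a btree \<Rightarrow> 'a \<Rightarrow> 'a \<Rightarrow> bool" where
  "anc T x y \<longleftrightarrow> (\<exists>n. (bpar T ^^ n) y = x \<and> (\<forall>k<n. (bpar T ^^ k) y \<noteq> broot T))"

definition is_branch :: "'a btree \<Rightarrow> 'a list \<Rightarrow> bool" where
  "is_branch T xs \<longleftrightarrow> set xs \<subseteq> bV T \<and>
     (\<forall>i. Suc i < length xs \<longrightarrow> xs ! Suc i \<noteq> broot T \<and> bpar T (xs ! Suc i) = xs ! i)"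

definition is_last_born :: "'a btree \<Rightarrow> 'a \<Rightarrow> bool" where
  "is_last_born T v \<longleftrightarrow> (\<exists>x\<in>bV T. \<not> is_leaf T x \<and> blb T x = v)"

definition burling_tree :: "'a btree \<Rightarrow> bool" where
  "burling_tree T \<longleftrightarrow> rooted_tree (bV T) (broot T) (bpar T)
     \<and> (\<forall>x\<in>bV T. \<not> is_leaf T x \<longrightarrow> blb T x \<in> children T x)
     \<and> (\<forall>v\<in>bV T. v \<noteq> broot T \<and> \<not> is_last_born T v \<longrightarrow>
          (\<exists>xs. is_branch T xs \<and> (xs \<noteq> [] \<longrightarrow> hd xs = blb T (bpar T v)) \<and> bc T v = set xs))
     \<and> (\<forall>v\<in>bV T. v = broot T \<or> is_last_born T v \<longrightarrow> bc T v = {})"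

definition oriented_graph :: "'a set \<Rightarrow> ('a \<times> 'a) set \<Rightarrow> bool" where
  "oriented_graph V E \<longleftrightarrow> finite V \<and> E \<subseteq> V \<times> V \<and> (\<forall>x. (x, x) \<notin> E)
     \<and> (\<forall>x y. (x, y) \<in> E \<longrightarrow> (y, x) \<notin> E)"

text \<open>G = (V,E) is derived from T: an induced subgraph of the fully derived graph.\<close>
definition derived :: "'a btree \<Rightarrow> 'a set \<Rightarrow> ('a \<times> 'a) set \<Rightarrow> bool" where
  "derived T V E \<longleftrightarrow> V \<subseteq> bV T \<and> E \<subseteq> V \<times> V \<and>
     (\<forall>u\<in>V. \<forall>v\<in>V. (u, v) \<in> E \<longleftrightarrow> v \<in> bc T u)"

definition top_arc :: "'a btree \<Rightarrow> ('a \<times> 'a) set \<Rightarrow> 'a \<Rightarrow> 'a \<Rightarrow> bool" where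
  "top_arc T E u v \<longleftrightarrow> (u, v) \<in> E \<and> (\<forall>x. (u, x) \<in> E \<longrightarrow> anc T v x)"

definition bottom_arc :: "'a btree \<Rightarrow> ('a \<times> 'a) set \<Rightarrow> 'a \<Rightarrow> 'a \<Rightarrow> bool" where
  "bottom_arc T E u v \<longleftrightarrow> (u, v) \<in> E \<and> (\<forall>x. (u, x) \<in> E \<longrightarrow> anc T x v)"

definition subdiv_arcs :: "('a \<times> 'a) set \<Rightarrow> 'a \<Rightarrow> 'a \<Rightarrow> 'a \<Rightarrow> ('a \<times> 'a) set" where
  "subdiv_arcs E u v w = (E - {(u, v)}) \<union> {(u, w), (w, v)}"

end

theory Submission
  imports Defs
begin

inductive_set ancs :: "'a btree \<Rightarrow> 'a \<Rightarrow> 'a set" for T :: "'a btree" and y :: 'a where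
  self: "y \<in> ancs T y"
| up: "z \<in> ancs T y \<Longrightarrow> z \<noteq> broot T \<Longrightarrow> bpar T z \<in> ancs T y"

lemma anc_iff: "anc T x y \<longleftrightarrow> x \<in> ancs T y"
proof
  assume "anc T x y"
  then obtain n where n: "(bpar T ^^ n) y = x" "\<forall>k<n. (bpar T ^^ k) y \<noteq> broot T"
    unfolding anc_def by blast
  have "\<forall>k<n. (bpar T ^^ k) y \<noteq> broot T \<Longrightarrow> (bpar T ^^ n) y \<in> ancs T y" for n
  proof (induction n)
    case 0 then show ?case by (simp add: ancs.self)
  next
    case (Suc n)
    then have "(bpar T ^^ n) y \<in> ancs T y" by simp
    moreover have "(bpar T ^^ n) y \<noteq> broot T" using Suc.prems by simp
    ultimately show ?case by (simp add: ancs.up)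
  qed
  from this[OF n(2)] n(1) show "x \<in> ancs T y" by simp
next
  assume "x \<in> ancs T y"
  then show "anc T x y"
  proof (induction rule: ancs.induct)
    case self
    then show ?case unfolding anc_def by (rule exI[of _ 0]) simp
  next
    case (up z)
    then obtain n where n: "(bpar T ^^ n) y = z" "\<forall>k<n. (bpar T ^^ k) y \<noteq> broot T"
      unfolding anc_def by blast
    show ?case unfolding anc_def
      apply (rule exI[of _ "Suc n"])
      using n up.hyps(2) by (auto simp: less_Suc_eq)
  qed
qed

lemma reach_iff: "(\<exists>n. (bpar T ^^ n) y = broot T) \<longleftrightarrow> broot T \<in> ancs T y"
proof
  assume "\<exists>n. (bpar T ^^ n) y = broot T"
  then obtain n where n: "(bpar T ^^ n) y = broot T" and least: "\<And>m. m < n \<Longrightarrow> (bpar T ^^ m) y \<noteq> broot T"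
    using exists_least_iff[of "\<lambda>n. (bpar T ^^ n) y = broot T"] by blast
  then have "anc T (broot T) y" unfolding anc_def by blast
  then show "broot T \<in> ancs T y" by (simp add: anc_iff)
next
  assume "broot T \<in> ancs T y"
  then show "\<exists>n. (bpar T ^^ n) y = broot T" by (auto simp: anc_iff[symmetric] anc_def)
qed

lemma ancs_in:
  assumes "\<forall>v\<in>bV T - {broot T}. bpar T v \<in> bV T" "y \<in> bV T" "x \<in> ancs T y"
  shows "x \<in> bV T"
  using assms(3) by induction (use assms(1,2) in auto)

lemma ancs_trans: "x \<in> ancs T z \<Longrightarrow> z \<in> ancs T y \<Longrightarrow> x \<in> ancs T y"
  by (induction rule: ancs.induct) (auto intro: ancs.up)

lemma ancs_par: "y \<noteq> broot T \<Longrightarrow> bpar T y \<in> ancs T y"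
  by (simp add: ancs.self ancs.up)

lemma ancs_cases: "x \<in> ancs T y \<Longrightarrow> x = y \<or> (y \<noteq> broot T \<and> x \<in> ancs T (bpar T y))"
  by (induction rule: ancs.induct) (auto intro: ancs.up ancs.self)

lemma ancs_root: "ancs T (broot T) = {broot T}"
  using ancs_cases[of _ T "broot T"] by (auto intro: ancs.self)

lemma ancs_step: "y \<noteq> broot T \<Longrightarrow> ancs T y = insert y (ancs T (bpar T y))"
  using ancs_cases[of _ T y] by (auto intro: ancs.self ancs_trans[OF _ ancs_par])

definition depth :: "'a btree \<Rightarrow> 'a \<Rightarrow> nat" where
  "depth T y = (LEAST n. (bpar T ^^ n) y = broot T)"

lemma depth_par:
  assumes "\<exists>n. (bpar T ^^ n) y = broot T" "y \<noteq> broot T"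
  shows "depth T (bpar T y) < depth T y"
proof -
  let ?P = "\<lambda>n. (bpar T ^^ n) y = broot T"
  have P: "?P (depth T y)" unfolding depth_def using assms(1) by (rule LeastI_ex)
  have "depth T y \<noteq> 0" using P assms(2) by (metis funpow_0)
  then obtain m where m: "depth T y = Suc m" by (cases "depth T y") auto
  have "(bpar T ^^ m) (bpar T y) = broot T" using P m by (simp add: funpow_Suc_right del: funpow.simps)
  then have "depth T (bpar T y) \<le> m" unfolding depth_def by (rule Least_le)
  with m show ?thesis by simp
qed

abbreviation rt :: "'a btree \<Rightarrow> bool" where
  "rt T \<equiv> rooted_tree (bV T) (broot T) (bpar T)"

lemma rt_reach: "rt T \<Longrightarrow> y \<in> bV T \<Longrightarrow> broot T \<in> ancs T y"
  unfolding rooted_tree_def reach_iff[symmetric] by blast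

lemma rt_par: "rt T \<Longrightarrow> y \<in> bV T \<Longrightarrow> y \<noteq> broot T \<Longrightarrow> bpar T y \<in> bV T"
  unfolding rooted_tree_def by blast

lemma rt_ancs_in: "rt T \<Longrightarrow> y \<in> bV T \<Longrightarrow> x \<in> ancs T y \<Longrightarrow> x \<in> bV T"
  by (rule ancs_in) (auto simp: rooted_tree_def)

lemma rt_depth_par: "rt T \<Longrightarrow> y \<in> bV T \<Longrightarrow> y \<noteq> broot T \<Longrightarrow> depth T (bpar T y) < depth T y"
  by (rule depth_par) (auto simp: rooted_tree_def)

lemma depth_anc:
  assumes "rt T" "y \<in> bV T" "x \<in> ancs T y"
  shows "x = y \<or> depth T x < depth T y"
  using assms(3)
proof induction
  case self then show ?case by simp
next
  case (up z)
  have "z \<in> bV T" using rt_ancs_in[OF assms(1,2) up.hyps(1)] .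
  then have dpz: "depth T (bpar T z) < depth T z" using rt_depth_par[OF assms(1)] up.hyps(2) by blast
  show ?case
  proof (cases "z = y")
    case True with dpz show ?thesis by simp
  next
    case False
    with up.IH have "depth T z < depth T y" by simp
    with dpz show ?thesis by simp
  qed
qed

lemma anc_antisym:
  assumes "rt T" "y \<in> bV T" "x \<in> ancs T y" "y \<in> ancs T x"
  shows "x = y"
proof -
  have xV: "x \<in> bV T" by (rule rt_ancs_in[OF assms(1,2,3)])
  show ?thesis
  proof (rule ccontr)
    assume ne: "x \<noteq> y"
    have "depth T x < depth T y" using depth_anc[OF assms(1,2,3)] ne by simp
    moreover have "depth T y < depth T x" using depth_anc[OF assms(1) xV assms(4)] ne by simp
    ultimately show False by simp
  qed
qed

lemma par_neq:
  assumes "rt T" "y \<in> bV T" "y \<noteq> broot T"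
  shows "bpar T y \<noteq> y"
proof
  assume "bpar T y = y"
  with rt_depth_par[OF assms] show False by simp
qed

lemma not_anc_child:
  assumes "rt T" "y \<in> bV T" "y \<noteq> broot T"
  shows "y \<notin> ancs T (bpar T y)"
proof
  assume "y \<in> ancs T (bpar T y)"
  from anc_antisym[OF assms(1,2) ancs_par[OF assms(3)] this] par_neq[OF assms] show False by simp
qed

lemma is_branch_Nil[simp]: "is_branch T []"
  by (simp add: is_branch_def)

lemma is_branch_single[simp]: "is_branch T [x] \<longleftrightarrow> x \<in> bV T"
  by (simp add: is_branch_def)

lemma allSuc: "(\<forall>i. Suc i < Suc (Suc n) \<longrightarrow> P i) \<longleftrightarrow> P 0 \<and> (\<forall>i. Suc i < Suc n \<longrightarrow> P (Suc i))"
proof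
  assume H: "\<forall>i. Suc i < Suc (Suc n) \<longrightarrow> P i"
  show "P 0 \<and> (\<forall>i. Suc i < Suc n \<longrightarrow> P (Suc i))" using H by simp
next
  assume H: "P 0 \<and> (\<forall>i. Suc i < Suc n \<longrightarrow> P (Suc i))"
  show "\<forall>i. Suc i < Suc (Suc n) \<longrightarrow> P i"
  proof (intro allI impI)
    fix i assume "Suc i < Suc (Suc n)" then show "P i" using H by (cases i) auto
  qed
qed

lemma is_branch_Cons2: "is_branch T (x # y # xs) \<longleftrightarrow>
   x \<in> bV T \<and> y \<noteq> broot T \<and> bpar T y = x \<and> is_branch T (y # xs)"
  unfolding is_branch_def length_Cons allSuc by auto

lemma is_branch_append: "is_branch T (ys @ zs) \<longleftrightarrow> is_branch T ys \<and> is_branch T zs \<and>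
   (ys \<noteq> [] \<longrightarrow> zs \<noteq> [] \<longrightarrow> hd zs \<noteq> broot T \<and> bpar T (hd zs) = last ys)"
proof (induction ys)
  case Nil then show ?case by simp
next
  case (Cons y ys)
  show ?case
  proof (cases ys)
    case Nil
    then show ?thesis by (cases zs) (auto simp: is_branch_Cons2)
  next
    case (Cons y' ys')
    have "is_branch T (y # ys @ zs) \<longleftrightarrow> y \<in> bV T \<and> y' \<noteq> broot T \<and> bpar T y' = y \<and> is_branch T (ys @ zs)"
      using Cons by (simp add: is_branch_Cons2)
    moreover have "is_branch T (y # ys) \<longleftrightarrow> y \<in> bV T \<and> y' \<noteq> broot T \<and> bpar T y' = y \<and> is_branch T ys"
      using Cons by (simp add: is_branch_Cons2)
    moreover have "last (y # ys) = last ys" "ys \<noteq> []" using Cons by auto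
    ultimately show ?thesis using Cons.IH by simp
  qed
qed

lemma is_branch_set: "is_branch T xs \<Longrightarrow> set xs \<subseteq> bV T"
  by (simp add: is_branch_def)

lemma branch_anc:
  assumes "is_branch T xs" "i \<le> j" "j < length xs"
  shows "xs ! i \<in> ancs T (xs ! j)"
  using assms(2,3)
proof (induction j)
  case 0 then show ?case by (simp add: ancs.self)
next
  case (Suc j)
  show ?case
  proof (cases "i = Suc j")
    case True then show ?thesis by (simp add: ancs.self)
  next
    case False
    then have "xs ! i \<in> ancs T (xs ! j)" using Suc by simp
    have sj: "Suc j < length xs" using Suc.prems by simp
    have "xs ! Suc j \<noteq> broot T \<and> bpar T (xs ! Suc j) = xs ! j"
      using assms(1) sj unfolding is_branch_def by blast
    then have "xs ! j \<in> ancs T (xs ! Suc j)" using ancs_par[of "xs ! Suc j" T] by simp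
    with \<open>xs ! i \<in> ancs T (xs ! j)\<close> show ?thesis by (rule ancs_trans)
  qed
qed

lemma is_branch_transfer:
  assumes "is_branch T xs" "set xs \<subseteq> bV T'" "broot T' = broot T"
    "\<forall>i. Suc i < length xs \<longrightarrow> bpar T' (xs ! Suc i) = bpar T (xs ! Suc i)"
  shows "is_branch T' xs"
proof -
  have "\<forall>i. Suc i < length xs \<longrightarrow> xs ! Suc i \<noteq> broot T' \<and> bpar T' (xs ! Suc i) = xs ! i"
    using assms(1,3,4) unfolding is_branch_def by simp
  then show ?thesis using assms(2) unfolding is_branch_def by blast
qed



definition op1 :: "'a btree \<Rightarrow> 'a \<Rightarrow> 'a set \<Rightarrow> 'a \<Rightarrow> 'a btree" where
 "op1 T q M a = \<lparr>bV = insert a (bV T), broot = broot T,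
   bpar = (\<lambda>z. if z \<in> M then a else if z = a then q else bpar T z),
   blb = (\<lambda>z. if z = q then a else if z = a then blb T q else blb T z),
   bc = (\<lambda>z. if z = a then {} else if z \<notin> M \<and> bc T z \<inter> M \<noteq> {} then insert a (bc T z) else bc T z)\<rparr>"

definition fins :: "'a set \<Rightarrow> 'a \<Rightarrow> 'a list \<Rightarrow> 'a list" where
  "fins M a xs = concat (map (\<lambda>y. if y \<in> M then [a, y] else [y]) xs)"

lemma fins_simps[simp]: "fins M a [] = []"
  "fins M a (y # ys) = (if y \<in> M then [a, y] else [y]) @ fins M a ys"
  "fins M a (xs @ ys) = fins M a xs @ fins M a ys"
  by (auto simp: fins_def)

lemma set_fins: "set (fins M a xs) = set xs \<union> (if set xs \<inter> M = {} then {} else {a})"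
  by (induction xs) auto

lemma hd_fins: "xs \<noteq> [] \<Longrightarrow> hd (fins M a xs) = (if hd xs \<in> M then a else hd xs)"
  by (cases xs) auto

lemma fins_Nil_iff: "fins M a xs = [] \<longleftrightarrow> xs = []"
  by (cases xs) auto

context
  fixes T :: "'a btree" and q :: 'a and M :: "'a set" and a :: 'a
  assumes bt: "burling_tree T" and qV: "q \<in> bV T" and MC: "M \<subseteq> children T q"
    and lbM: "blb T q \<in> M" and aV: "a \<notin> bV T"
begin

lemma rtT: "rt T" using bt by (simp add: burling_tree_def)

lemma M_props: "m \<in> M \<Longrightarrow> m \<in> bV T \<and> m \<noteq> broot T \<and> bpar T m = q"
  using MC by (auto simp: children_def)

lemma a_notin_M: "a \<notin> M" using M_props aV by blast

lemma q_notin_M: "q \<notin> M"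
proof
  assume "q \<in> M"
  then have "q \<noteq> broot T" "bpar T q = q" using M_props by auto
  with par_neq[OF rtT qV] show False by simp
qed

lemma a_neq_q: "a \<noteq> q" using aV qV by blast

lemma root_in: "broot T \<in> bV T" using rtT by (simp add: rooted_tree_def)

lemma a_neq_root: "a \<noteq> broot T" using aV root_in by blast

lemma T1_simps:
  "bV (op1 T q M a) = insert a (bV T)" "broot (op1 T q M a) = broot T"
  "bpar (op1 T q M a) z = (if z \<in> M then a else if z = a then q else bpar T z)"
  "blb (op1 T q M a) z = (if z = q then a else if z = a then blb T q else blb T z)"
  "bc (op1 T q M a) z = (if z = a then {} else if z \<notin> M \<and> bc T z \<inter> M \<noteq> {} then insert a (bc T z) else bc T z)"
  by (simp_all add: op1_def)

lemma T1_ancs: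
  assumes yV: "y \<in> bV T"
  shows "x \<in> ancs (op1 T q M a) y \<longleftrightarrow> x \<in> ancs T y \<or> (x = a \<and> (\<exists>m\<in>M. m \<in> ancs T y))"
proof
  assume "x \<in> ancs (op1 T q M a) y"
  then show "x \<in> ancs T y \<or> (x = a \<and> (\<exists>m\<in>M. m \<in> ancs T y))"
  proof induction
    case self then show ?case by (simp add: ancs.self)
  next
    case (up z)
    have znr: "z \<noteq> broot T" using up.hyps(2) by (simp add: T1_simps)
    from up.IH show ?case
    proof
      assume z: "z \<in> ancs T y"
      show ?case
      proof (cases "z \<in> M")
        case True then show ?thesis using z by (auto simp: T1_simps)
      next
        case False
        have "z \<in> bV T" by (rule rt_ancs_in[OF rtT yV z])
        then have "z \<noteq> a" using aV by auto
        then have "bpar (op1 T q M a) z = bpar T z" using False by (simp add: T1_simps)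
        moreover have "bpar T z \<in> ancs T y" using z znr by (rule ancs.up)
        ultimately show ?thesis by simp
      qed
    next
      assume "z = a \<and> (\<exists>m\<in>M. m \<in> ancs T y)"
      then obtain m where m: "z = a" "m \<in> M" "m \<in> ancs T y" by blast
      have "bpar (op1 T q M a) z = bpar T m" "m \<noteq> broot T"
        using m a_notin_M M_props[OF m(2)] by (simp_all add: T1_simps)
      moreover have "bpar T m \<in> ancs T y" using m(3) \<open>m \<noteq> broot T\<close> by (rule ancs.up)
      ultimately show ?thesis by simp
    qed
  qed
next
  have 1: "z \<in> ancs (op1 T q M a) y" if "z \<in> ancs T y" for z
    using that
  proof induction
    case self then show ?case by (rule ancs.self)
  next
    case (up z)
    have zV: "z \<in> bV T" by (rule rt_ancs_in[OF rtT yV up.hyps(1)])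
    have znr: "z \<noteq> broot (op1 T q M a)" using up.hyps(2) by (simp add: T1_simps)
    show ?case
    proof (cases "z \<in> M")
      case True
      have "bpar (op1 T q M a) z \<in> ancs (op1 T q M a) y" using up.IH znr by (rule ancs.up)
      then have "a \<in> ancs (op1 T q M a) y" using True by (simp add: T1_simps)
      moreover have "a \<noteq> broot (op1 T q M a)" using a_neq_root by (simp add: T1_simps)
      ultimately have "bpar (op1 T q M a) a \<in> ancs (op1 T q M a) y" by (rule ancs.up)
      then show ?thesis using True M_props[OF True] a_notin_M by (simp add: T1_simps)
    next
      case False
      then have "bpar (op1 T q M a) z = bpar T z" using zV aV by (auto simp: T1_simps)
      moreover have "bpar (op1 T q M a) z \<in> ancs (op1 T q M a) y" using up.IH znr by (rule ancs.up)
      ultimately show ?thesis by simp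
    qed
  qed
  assume "x \<in> ancs T y \<or> (x = a \<and> (\<exists>m\<in>M. m \<in> ancs T y))"
  then show "x \<in> ancs (op1 T q M a) y"
  proof
    assume "x \<in> ancs T y" then show ?thesis by (rule 1)
  next
    assume "x = a \<and> (\<exists>m\<in>M. m \<in> ancs T y)"
    then obtain m where m: "x = a" "m \<in> M" "m \<in> ancs T y" by blast
    have "m \<in> ancs (op1 T q M a) y" using 1 m(3) .
    moreover have "m \<noteq> broot (op1 T q M a)" using M_props[OF m(2)] by (simp add: T1_simps)
    ultimately have "bpar (op1 T q M a) m \<in> ancs (op1 T q M a) y" by (rule ancs.up)
    then show ?thesis using m by (simp add: T1_simps)
  qed
qed

lemma T1_anc_old: "x \<in> bV T \<Longrightarrow> y \<in> bV T \<Longrightarrow> anc (op1 T q M a) x y \<longleftrightarrow> anc T x y"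
  using T1_ancs aV by (auto simp: anc_iff)

lemma T1_ancs_a: "ancs (op1 T q M a) a = insert a (ancs (op1 T q M a) q)"
proof -
  have "a \<noteq> broot (op1 T q M a)" using a_neq_root by (simp add: T1_simps)
  then have "ancs (op1 T q M a) a = insert a (ancs (op1 T q M a) (bpar (op1 T q M a) a))"
    by (rule ancs_step)
  then show ?thesis using a_notin_M by (simp add: T1_simps)
qed


lemma T1_children:
  assumes "x \<in> bV (op1 T q M a)"
  shows "children (op1 T q M a) x =
    (if x = q then insert a (children T q - M) else if x = a then M else children T x)"
proof -
  have xx: "x \<in> bV T \<or> x = a" using assms by (auto simp: T1_simps)
  show ?thesis
  proof (cases "x = q")
    case True
    show ?thesis
      unfolding children_def T1_simps using True a_neq_root a_neq_q M_props a_notin_M aV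
      by auto
  next
    case False
    note xq = False
    show ?thesis
    proof (cases "x = a")
      case True
      have "v \<notin> bV T \<or> v = broot T \<or> bpar T v \<noteq> a" for v
        using rt_par[OF rtT, of v] aV by auto
      then show ?thesis
        unfolding children_def T1_simps using True a_neq_q M_props a_notin_M aV
        by auto
    next
      case False
      then show ?thesis
        unfolding children_def T1_simps using xq M_props a_notin_M aV a_neq_q
        by auto
    qed
  qed
qed

lemma q_nonleaf: "\<not> is_leaf T q" using lbM MC by (auto simp: is_leaf_def)

lemma T1_leaf:
  assumes "x \<in> bV (op1 T q M a)"
  shows "is_leaf (op1 T q M a) x \<longleftrightarrow> x \<noteq> q \<and> x \<noteq> a \<and> is_leaf T x"
  using T1_children[OF assms] lbM unfolding is_leaf_def by auto

lemma T1_lastborn: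
  assumes "z \<in> bV (op1 T q M a)"
  shows "is_last_born (op1 T q M a) z \<longleftrightarrow> z = a \<or> is_last_born T z"
proof
  assume "is_last_born (op1 T q M a) z"
  then obtain x where x: "x \<in> bV (op1 T q M a)" "\<not> is_leaf (op1 T q M a) x" "blb (op1 T q M a) x = z"
    unfolding is_last_born_def by blast
  show "z = a \<or> is_last_born T z"
  proof (cases "x = q")
    case True then show ?thesis using x by (simp add: T1_simps)
  next
    case False
    note xq = False
    show ?thesis
    proof (cases "x = a")
      case True
      then have "z = blb T q" using x a_neq_q by (simp add: T1_simps)
      then show ?thesis using qV q_nonleaf unfolding is_last_born_def by blast
    next
      case False
      then have "x \<in> bV T" "\<not> is_leaf T x" "blb T x = z"
        using x xq T1_leaf[OF x(1)] by (simp_all add: T1_simps)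
      then show ?thesis unfolding is_last_born_def by blast
    qed
  qed
next
  assume "z = a \<or> is_last_born T z"
  then show "is_last_born (op1 T q M a) z"
  proof
    assume "z = a"
    moreover have "q \<in> bV (op1 T q M a)" using qV by (simp add: T1_simps)
    moreover have "\<not> is_leaf (op1 T q M a) q" using T1_leaf[of q] qV by (simp add: T1_simps)
    ultimately show ?thesis unfolding is_last_born_def by (auto simp: T1_simps)
  next
    assume "is_last_born T z"
    then obtain x where x: "x \<in> bV T" "\<not> is_leaf T x" "blb T x = z"
      unfolding is_last_born_def by blast
    show ?thesis
    proof (cases "x = q")
      case True
      have "a \<in> bV (op1 T q M a)" by (simp add: T1_simps)
      moreover have "\<not> is_leaf (op1 T q M a) a" using T1_leaf[of a] by (simp add: T1_simps)
      moreover have "blb (op1 T q M a) a = z" using True x a_neq_q by (simp add: T1_simps)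
      ultimately show ?thesis unfolding is_last_born_def by blast
    next
      case False
      have xa: "x \<noteq> a" using x aV by auto
      have "x \<in> bV (op1 T q M a)" using x by (simp add: T1_simps)
      moreover have "\<not> is_leaf (op1 T q M a) x" using T1_leaf[of x] x False by (simp add: T1_simps)
      moreover have "blb (op1 T q M a) x = z" using False xa x by (simp add: T1_simps)
      ultimately show ?thesis unfolding is_last_born_def by blast
    qed
  qed
qed

lemma T1_branch_fins:
  assumes "is_branch T xs"
  shows "is_branch (op1 T q M a) (fins M a xs)"
  using assms
proof (induction xs)
  case Nil then show ?case by simp
next
  case (Cons x xs)
  have bx: "is_branch T [x]" and bxs: "is_branch T xs"
    and link: "xs \<noteq> [] \<Longrightarrow> hd xs \<noteq> broot T \<and> bpar T (hd xs) = x"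
    using Cons.prems is_branch_append[of T "[x]" xs] by auto
  have xV: "x \<in> bV T" using bx by simp
  have IH: "is_branch (op1 T q M a) (fins M a xs)" using Cons.IH bxs .
  have bfx: "is_branch (op1 T q M a) (if x \<in> M then [a, x] else [x])"
  proof (cases "x \<in> M")
    case True
    then show ?thesis using xV M_props[OF True] by (simp add: is_branch_Cons2 T1_simps)
  next
    case False then show ?thesis using xV by (simp add: T1_simps)
  qed
  have lk: "hd (fins M a xs) \<noteq> broot (op1 T q M a) \<and>
      bpar (op1 T q M a) (hd (fins M a xs)) = last (if x \<in> M then [a, x] else [x])"
    if ne: "fins M a xs \<noteq> []"
  proof -
    have xsne: "xs \<noteq> []" using ne by auto
    have hxV: "hd xs \<in> bV T" using bxs xsne is_branch_set by (metis hd_in_set subsetD)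
    show ?thesis
    proof (cases "hd xs \<in> M")
      case True
      have "bpar T (hd xs) = q" using M_props[OF True] by simp
      then have "x = q" using link[OF xsne] by simp
      then show ?thesis using True hd_fins[OF xsne] a_neq_root a_notin_M q_notin_M
        by (simp add: T1_simps)
    next
      case False
      have "hd xs \<noteq> a" using hxV aV by auto
      then show ?thesis using False hd_fins[OF xsne] link[OF xsne] by (simp add: T1_simps)
    qed
  qed
  show ?case using is_branch_append[of "op1 T q M a" "if x \<in> M then [a, x] else [x]" "fins M a xs"]
    bfx IH lk by simp
qed


lemma T1_branch_notM:
  assumes vV: "v \<in> bV T" and vnr: "v \<noteq> broot T" and vM: "v \<notin> M"
    and br: "is_branch T xs" and hd: "xs \<noteq> [] \<longrightarrow> hd xs = blb T (bpar T v)" and cv: "bc T v = set xs"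
  shows "is_branch (op1 T q M a) (fins M a xs)
    \<and> (fins M a xs \<noteq> [] \<longrightarrow> hd (fins M a xs) = blb (op1 T q M a) (bpar (op1 T q M a) v))
    \<and> bc (op1 T q M a) v = set (fins M a xs)"
proof (intro conjI impI)
  show "is_branch (op1 T q M a) (fins M a xs)" using br by (rule T1_branch_fins)
  have va: "v \<noteq> a" using vV aV by auto
  show "bc (op1 T q M a) v = set (fins M a xs)"
    using va vM cv by (simp add: T1_simps set_fins Int_commute)
  assume ne: "fins M a xs \<noteq> []"
  then have xsne: "xs \<noteq> []" by auto
  have pv: "bpar (op1 T q M a) v = bpar T v" using va vM by (simp add: T1_simps)
  have pV: "bpar T v \<in> bV T" using rt_par[OF rtT vV vnr] .
  have "v \<in> children T (bpar T v)" using vV vnr by (simp add: children_def)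
  then have nl: "\<not> is_leaf T (bpar T v)" by (auto simp: is_leaf_def)
  have lch: "blb T (bpar T v) \<in> children T (bpar T v)"
    using bt pV nl unfolding burling_tree_def by blast
  show "hd (fins M a xs) = blb (op1 T q M a) (bpar (op1 T q M a) v)"
  proof (cases "hd xs \<in> M")
    case True
    have "bpar T (hd xs) = q" using M_props[OF True] by simp
    moreover have "bpar T (hd xs) = bpar T v" using lch hd xsne by (simp add: children_def)
    ultimately have "bpar T v = q" by simp
    then show ?thesis using hd_fins[OF xsne] True pv by (simp add: T1_simps)
  next
    case False
    have "bpar T v \<noteq> q" using False hd xsne lbM by auto
    moreover have "bpar T v \<noteq> a" using pV aV by auto
    ultimately show ?thesis using hd_fins[OF xsne] False pv hd xsne by (simp add: T1_simps)
  qed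
qed

lemma T1_branch_M:
  assumes vM: "v \<in> M"
    and br: "is_branch T xs" and hd: "xs \<noteq> [] \<longrightarrow> hd xs = blb T (bpar T v)" and cv: "bc T v = set xs"
  shows "is_branch (op1 T q M a) xs
    \<and> (xs \<noteq> [] \<longrightarrow> hd xs = blb (op1 T q M a) (bpar (op1 T q M a) v))
    \<and> bc (op1 T q M a) v = set xs"
proof (intro conjI impI)
  have va: "v \<noteq> a" using vM a_notin_M by auto
  show "bc (op1 T q M a) v = set xs" using va vM cv by (simp add: T1_simps)
  show "hd xs = blb (op1 T q M a) (bpar (op1 T q M a) v)" if "xs \<noteq> []"
    using that hd vM M_props[OF vM] a_neq_q by (simp add: T1_simps)
  have lqV: "blb T q \<in> bV T" "blb T q \<noteq> broot T" "bpar T (blb T q) = q" using M_props[OF lbM] by auto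
  have nM: "xs ! Suc i \<notin> M" if i: "Suc i < length xs" for i
  proof
    assume inM: "xs ! Suc i \<in> M"
    have "bpar T (xs ! Suc i) = xs ! i" using br i unfolding is_branch_def by blast
    then have xi: "xs ! i = q" using M_props[OF inM] by simp
    have "xs ! 0 \<in> ancs T (xs ! i)" using branch_anc[OF br, of 0 i] i by simp
    moreover have "xs ! 0 = blb T q"
    proof -
      have xne: "xs \<noteq> []" using i by auto
      then show ?thesis using hd M_props[OF vM] by (simp add: hd_conv_nth)
    qed
    ultimately have "blb T q \<in> ancs T (bpar T (blb T q))" using xi lqV by simp
    with not_anc_child[OF rtT lqV(1,2)] show False by simp
  qed
  show "is_branch (op1 T q M a) xs"
  proof (rule is_branch_transfer[OF br])
    show "set xs \<subseteq> bV (op1 T q M a)" using is_branch_set[OF br] by (auto simp: T1_simps)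
    show "broot (op1 T q M a) = broot T" by (simp add: T1_simps)
    show "\<forall>i. Suc i < length xs \<longrightarrow> bpar (op1 T q M a) (xs ! Suc i) = bpar T (xs ! Suc i)"
    proof (intro allI impI)
      fix i assume i: "Suc i < length xs"
      have "xs ! Suc i \<in> bV T" using is_branch_set[OF br] i by (meson nth_mem subsetD)
      then have "xs ! Suc i \<noteq> a" using aV by auto
      then show "bpar (op1 T q M a) (xs ! Suc i) = bpar T (xs ! Suc i)" using nM[OF i] by (simp add: T1_simps)
    qed
  qed
qed

lemma T1_burling: "burling_tree (op1 T q M a)"
  unfolding burling_tree_def
proof (intro conjI ballI impI)
  have fin: "finite (bV T)" using rtT by (simp add: rooted_tree_def)
  have reachq: "broot T \<in> ancs (op1 T q M a) q" using T1_ancs[OF qV] rt_reach[OF rtT qV] by simp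
  show "rt (op1 T q M a)"
    unfolding rooted_tree_def
  proof (intro conjI ballI)
    show "finite (bV (op1 T q M a))" using fin by (simp add: T1_simps)
    show "broot (op1 T q M a) \<in> bV (op1 T q M a)" using root_in by (simp add: T1_simps)
    fix v assume v: "v \<in> bV (op1 T q M a) - {broot (op1 T q M a)}"
    show "bpar (op1 T q M a) v \<in> bV (op1 T q M a)"
      using v qV rt_par[OF rtT, of v] by (auto simp: T1_simps)
  next
    fix v assume v: "v \<in> bV (op1 T q M a)"
    have "broot T \<in> ancs (op1 T q M a) v"
    proof (cases "v = a")
      case True then show ?thesis using T1_ancs_a reachq by simp
    next
      case False
      then have vV: "v \<in> bV T" using v by (simp add: T1_simps)
      show ?thesis using T1_ancs[OF vV] rt_reach[OF rtT vV] by simp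
    qed
    then have "broot (op1 T q M a) \<in> ancs (op1 T q M a) v" by (simp add: T1_simps)
    then show "\<exists>n. (bpar (op1 T q M a) ^^ n) v = broot (op1 T q M a)"
      by (simp only: reach_iff)
  qed
next
  fix x assume x: "x \<in> bV (op1 T q M a)" and nl: "\<not> is_leaf (op1 T q M a) x"
  show "blb (op1 T q M a) x \<in> children (op1 T q M a) x"
  proof (cases "x = q")
    case True then show ?thesis using T1_children[OF x] by (simp add: T1_simps)
  next
    case False
    note xq = False
    show ?thesis
    proof (cases "x = a")
      case True then show ?thesis using T1_children[OF x] a_neq_q lbM by (simp add: T1_simps)
    next
      case False
      have xV: "x \<in> bV T" using x False by (simp add: T1_simps)
      have "\<not> is_leaf T x" using nl T1_leaf[OF x] xq False by simp
      then have "blb T x \<in> children T x" using bt xV unfolding burling_tree_def by blast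
      then show ?thesis using T1_children[OF x] xq False by (simp add: T1_simps)
    qed
  qed
next
  fix v assume v: "v \<in> bV (op1 T q M a)"
    and cond: "v \<noteq> broot (op1 T q M a) \<and> \<not> is_last_born (op1 T q M a) v"
  have va: "v \<noteq> a" using cond T1_lastborn[OF v] by simp
  have vV: "v \<in> bV T" using v va by (simp add: T1_simps)
  have vnr: "v \<noteq> broot T" using cond by (simp add: T1_simps)
  have nlb: "\<not> is_last_born T v" using cond T1_lastborn[OF v] by simp
  obtain xs where br: "is_branch T xs" and hd: "xs \<noteq> [] \<longrightarrow> hd xs = blb T (bpar T v)"
    and cv: "bc T v = set xs"
    using bt vV vnr nlb unfolding burling_tree_def by blast
  show "\<exists>xs. is_branch (op1 T q M a) xs \<and>
            (xs \<noteq> [] \<longrightarrow> hd xs = blb (op1 T q M a) (bpar (op1 T q M a) v)) \<and>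
            bc (op1 T q M a) v = set xs"
  proof (cases "v \<in> M")
    case True
    show ?thesis using T1_branch_M[OF True br hd cv] by blast
  next
    case False
    show ?thesis using T1_branch_notM[OF vV vnr False br hd cv] by blast
  qed
next
  fix v assume v: "v \<in> bV (op1 T q M a)"
    and cond: "v = broot (op1 T q M a) \<or> is_last_born (op1 T q M a) v"
  show "bc (op1 T q M a) v = {}"
  proof (cases "v = a")
    case True then show ?thesis by (simp add: T1_simps)
  next
    case False
    have vV: "v \<in> bV T" using v False by (simp add: T1_simps)
    have "v = broot T \<or> is_last_born T v" using cond T1_lastborn[OF v] False by (simp add: T1_simps)
    then have "bc T v = {}" using bt vV unfolding burling_tree_def by blast
    then show ?thesis using False by (simp add: T1_simps)
  qed
qed

lemma T1_derived:
  assumes "derived T V E"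
  shows "derived (op1 T q M a) V E"
proof -
  have VV: "V \<subseteq> bV T" using assms by (simp add: derived_def)
  have aV': "a \<notin> V" using VV aV by auto
  show ?thesis unfolding derived_def
  proof (intro conjI ballI)
    show "V \<subseteq> bV (op1 T q M a)" using VV by (auto simp: T1_simps)
    show "E \<subseteq> V \<times> V" using assms by (simp add: derived_def)
    fix x y assume x: "x \<in> V" and y: "y \<in> V"
    have "x \<noteq> a" "y \<noteq> a" using x y aV' by auto
    then have "y \<in> bc (op1 T q M a) x \<longleftrightarrow> y \<in> bc T x" by (simp add: T1_simps)
    then show "(x, y) \<in> E \<longleftrightarrow> y \<in> bc (op1 T q M a) x"
      using assms x y by (simp add: derived_def)
  qed
qed

lemma T1_top:
  assumes "V \<subseteq> bV T" "E \<subseteq> V \<times> V"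
  shows "top_arc (op1 T q M a) E x y \<longleftrightarrow> top_arc T E x y"
proof -
  have "(x, z) \<in> E \<Longrightarrow> (x, y) \<in> E \<Longrightarrow> anc (op1 T q M a) y z \<longleftrightarrow> anc T y z" for z
    using assms T1_anc_old by blast
  then show ?thesis unfolding top_arc_def by blast
qed

lemma T1_bottom:
  assumes "V \<subseteq> bV T" "E \<subseteq> V \<times> V"
  shows "bottom_arc (op1 T q M a) E x y \<longleftrightarrow> bottom_arc T E x y"
proof -
  have "(x, z) \<in> E \<Longrightarrow> (x, y) \<in> E \<Longrightarrow> anc (op1 T q M a) z y \<longleftrightarrow> anc T z y" for z
    using assms T1_anc_old by blast
  then show ?thesis unfolding bottom_arc_def by blast
qed

end



definition op2 :: "'a btree \<Rightarrow> 'a \<Rightarrow> 'a \<Rightarrow> 'a \<Rightarrow> 'a \<Rightarrow> 'a \<Rightarrow> 'a list \<Rightarrow> 'a btree" where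
 "op2 T u w s a v ys = \<lparr>bV = insert w (bV T), broot = broot T,
   bpar = (bpar T)(w := s), blb = blb T,
   bc = (bc T)(w := {a, v}, u := set (ys @ [s, w]))\<rparr>"

context
  fixes T :: "'a btree" and V :: "'a set" and E :: "('a \<times> 'a) set"
    and u v w s a :: 'a and xs ys zs :: "'a list"
  assumes bt: "burling_tree T" and der: "derived T V E"
    and bot: "bottom_arc T E u v"
    and br: "is_branch T xs" and hdx: "hd xs = blb T (bpar T u)" and cu: "bc T u = set xs"
    and xsd: "xs = ys @ [s, a, v] @ zs" and las: "blb T s = a" and aNV: "a \<notin> V"
    and wV: "w \<notin> bV T"
begin

abbreviation "T' \<equiv> op2 T u w s a v ys"

lemma rtT2: "rt T" using bt by (simp add: burling_tree_def)
lemma root_in2: "broot T \<in> bV T" using rtT2 by (simp add: rooted_tree_def)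
lemma w_neq_root: "w \<noteq> broot T" using wV root_in2 by auto

lemma VV: "V \<subseteq> bV T" using der by (simp add: derived_def)
lemma EVV: "E \<subseteq> V \<times> V" using der by (simp add: derived_def)
lemma uvE: "(u, v) \<in> E" using bot by (simp add: bottom_arc_def)
lemma uV: "u \<in> V" using uvE EVV by auto
lemma vV: "v \<in> V" using uvE EVV by auto
lemma uw: "u \<noteq> w" using uV VV wV by auto
lemma vw: "v \<noteq> w" using vV VV wV by auto
lemma derE: "x \<in> V \<Longrightarrow> y \<in> V \<Longrightarrow> (x, y) \<in> E \<longleftrightarrow> y \<in> bc T x"
  using der by (simp add: derived_def)

lemma br_parts:
  "is_branch T (ys @ [s])" "s \<in> bV T" "a \<in> bV T" "a \<noteq> broot T" "bpar T a = s"
  "v \<noteq> broot T" "bpar T v = a" "is_branch T (v # zs)"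
proof -
  have b1: "is_branch T ((ys @ [s]) @ (a # v # zs))" using br xsd by simp
  then show "is_branch T (ys @ [s])" using is_branch_append[of T "ys @ [s]" "a # v # zs"] by blast
  have b2: "is_branch T (s # a # v # zs)" using br xsd is_branch_append[of T ys "s # a # v # zs"] by simp
  then show "s \<in> bV T" "a \<noteq> broot T" "bpar T a = s" "v \<noteq> broot T" "bpar T v = a" "is_branch T (v # zs)"
    by (simp_all add: is_branch_Cons2)
  show "a \<in> bV T" using b2 is_branch_set by fastforce
qed

lemma vbV: "v \<in> bV T" using vV VV by auto

lemma pre_anc: "y \<in> set (ys @ [s]) \<Longrightarrow> y \<in> ancs T s"
proof -
  assume "y \<in> set (ys @ [s])"
  then obtain i where i: "i < length (ys @ [s])" "(ys @ [s]) ! i = y" by (meson in_set_conv_nth)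
  have "(ys @ [s]) ! i \<in> ancs T ((ys @ [s]) ! (length ys))"
    using branch_anc[OF br_parts(1), of i "length ys"] i(1) by simp
  then show ?thesis using i by simp
qed

lemma zs_anc: "z \<in> set zs \<Longrightarrow> v \<in> ancs T z"
proof -
  assume "z \<in> set zs"
  then obtain i where i: "i < length zs" "zs ! i = z" by (meson in_set_conv_nth)
  have "(v # zs) ! 0 \<in> ancs T ((v # zs) ! Suc i)"
    using branch_anc[OF br_parts(8), of 0 "Suc i"] i(1) by simp
  then show ?thesis using i by simp
qed

lemma v_notin_pre: "v \<notin> set (ys @ [s])"
proof
  assume "v \<in> set (ys @ [s])"
  then have "v \<in> ancs T s" by (rule pre_anc)
  moreover have "a \<in> ancs T v" using ancs_par[OF br_parts(6)] br_parts(7) by simp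
  ultimately have "a \<in> ancs T (bpar T a)" using br_parts(5) ancs_trans by metis
  with not_anc_child[OF rtT2 br_parts(3,4)] show False by simp
qed

lemma key_set:
  assumes yV: "y \<in> V"
  shows "(y \<in> bc T u \<and> y \<noteq> v) \<longleftrightarrow> y \<in> set (ys @ [s])"
proof
  assume "y \<in> set (ys @ [s])"
  then show "y \<in> bc T u \<and> y \<noteq> v" using v_notin_pre cu xsd by auto
next
  assume H: "y \<in> bc T u \<and> y \<noteq> v"
  then have "y \<in> set ys \<or> y = s \<or> y = a \<or> y = v \<or> y \<in> set zs" using cu xsd by auto
  moreover have "y \<notin> set zs"
  proof
    assume yz: "y \<in> set zs"
    have "(u, y) \<in> E" using derE[OF uV yV] H by simp
    then have "anc T y v" using bot by (simp add: bottom_arc_def)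
    then have "y \<in> ancs T v" by (simp add: anc_iff)
    from anc_antisym[OF rtT2 vbV this zs_anc[OF yz]] H show False by simp
  qed
  ultimately show "y \<in> set (ys @ [s])" using H yV aNV by auto
qed

lemma T2_simps:
  "bV T' = insert w (bV T)" "broot T' = broot T" "bpar T' z = (if z = w then s else bpar T z)"
  "blb T' z = blb T z"
  "bc T' z = (if z = u then set (ys @ [s, w]) else if z = w then {a, v} else bc T z)"
  by (auto simp: op2_def)

lemma T2_ancs_old:
  assumes yV: "y \<in> bV T"
  shows "ancs T' y = ancs T y"
proof
  show "ancs T' y \<subseteq> ancs T y"
  proof
    fix x assume "x \<in> ancs T' y"
    then show "x \<in> ancs T y"
    proof induction
      case self then show ?case by (rule ancs.self)
    next
      case (up z)
      have "z \<in> bV T" by (rule rt_ancs_in[OF rtT2 yV up.IH])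
      then have "z \<noteq> w" using wV by auto
      moreover have "z \<noteq> broot T" using up.hyps(2) by (simp add: T2_simps)
      ultimately show ?case using ancs.up[OF up.IH] by (simp add: T2_simps)
    qed
  qed
  show "ancs T y \<subseteq> ancs T' y"
  proof
    fix x assume "x \<in> ancs T y"
    then show "x \<in> ancs T' y"
    proof induction
      case self then show ?case by (rule ancs.self)
    next
      case (up z)
      have "z \<in> bV T" by (rule rt_ancs_in[OF rtT2 yV up.hyps(1)])
      then have "z \<noteq> w" using wV by auto
      moreover have "z \<noteq> broot T'" using up.hyps(2) by (simp add: T2_simps)
      ultimately show ?case using ancs.up[OF up.IH] by (simp add: T2_simps)
    qed
  qed
qed

lemma T2_ancs_w: "ancs T' w = insert w (ancs T s)"
proof -
  have "w \<noteq> broot T'" using w_neq_root by (simp add: T2_simps)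
  then have "ancs T' w = insert w (ancs T' (bpar T' w))" by (rule ancs_step)
  then show ?thesis using T2_ancs_old[OF br_parts(2)] by (simp add: T2_simps)
qed

lemma T2_anc_old: "y \<in> bV T \<Longrightarrow> anc T' x y \<longleftrightarrow> anc T x y"
  using T2_ancs_old by (simp add: anc_iff)

lemma T2_anc_w: "anc T' x w \<longleftrightarrow> x = w \<or> x \<in> ancs T s"
  using T2_ancs_w by (simp add: anc_iff)


lemma cu_ne: "bc T u \<noteq> {}" using derE[OF uV vV] uvE by auto
lemma u_props: "u \<in> bV T" "u \<noteq> broot T" "\<not> is_last_born T u"
proof -
  show uB: "u \<in> bV T" using uV VV by auto
  have "\<not> (u = broot T \<or> is_last_born T u)"
    using bt uB cu_ne unfolding burling_tree_def by blast
  then show "u \<noteq> broot T" "\<not> is_last_born T u" by auto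
qed

lemma T2_children_old:
  assumes "x \<in> bV T"
  shows "children T' x = (if x = s then insert w (children T x) else children T x)"
  unfolding children_def T2_simps using w_neq_root wV by auto

lemma T2_children_w: "children T' w = {}"
proof -
  have "z \<in> bV T \<Longrightarrow> z \<noteq> broot T \<Longrightarrow> bpar T z \<noteq> w" for z using rt_par[OF rtT2, of z] wV by auto
  moreover have "s \<noteq> w" using br_parts(2) wV by auto
  ultimately show ?thesis unfolding children_def T2_simps by auto
qed

lemma s_nonleaf: "\<not> is_leaf T s"
proof -
  have "a \<in> children T s" using br_parts(3,4,5) by (simp add: children_def)
  then show ?thesis by (auto simp: is_leaf_def)
qed

lemma T2_leaf_old: "x \<in> bV T \<Longrightarrow> is_leaf T' x \<longleftrightarrow> is_leaf T x"
  using T2_children_old s_nonleaf unfolding is_leaf_def by auto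

lemma T2_leaf_w: "is_leaf T' w" using T2_children_w by (simp add: is_leaf_def)

lemma T2_lastborn: "z \<in> bV T' \<Longrightarrow> is_last_born T' z \<longleftrightarrow> z \<noteq> w \<and> is_last_born T z"
proof -
  assume z: "z \<in> bV T'"
  have A: "is_last_born T' z \<longleftrightarrow> is_last_born T z"
  proof
    assume "is_last_born T' z"
    then obtain x where x: "x \<in> bV T'" "\<not> is_leaf T' x" "blb T' x = z" unfolding is_last_born_def by blast
    have "x \<noteq> w" using x T2_leaf_w by auto
    then have "x \<in> bV T" using x by (simp add: T2_simps)
    then show "is_last_born T z" using x T2_leaf_old unfolding is_last_born_def by (auto simp: T2_simps)
  next
    assume "is_last_born T z"
    then obtain x where x: "x \<in> bV T" "\<not> is_leaf T x" "blb T x = z" unfolding is_last_born_def by blast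
    then show "is_last_born T' z" using T2_leaf_old unfolding is_last_born_def by (auto simp: T2_simps)
  qed
  have "\<not> is_last_born T w"
  proof
    assume "is_last_born T w"
    then obtain x where x: "x \<in> bV T" "\<not> is_leaf T x" "blb T x = w" unfolding is_last_born_def by blast
    then have "w \<in> children T x" using bt unfolding burling_tree_def by blast
    then show False using wV by (simp add: children_def)
  qed
  with A show ?thesis by auto
qed

lemma T2_burling: "burling_tree T'"
  unfolding burling_tree_def
proof (intro conjI ballI impI)
  show "rt T'"
    unfolding rooted_tree_def
  proof (intro conjI ballI)
    show "finite (bV T')" using rtT2 by (simp add: T2_simps rooted_tree_def)
    show "broot T' \<in> bV T'" using root_in2 by (simp add: T2_simps)
    fix x assume x: "x \<in> bV T' - {broot T'}"
    show "bpar T' x \<in> bV T'"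
      using x br_parts(2) rt_par[OF rtT2, of x] by (auto simp: T2_simps)
  next
    fix x assume x: "x \<in> bV T'"
    have "broot T \<in> ancs T' x"
    proof (cases "x = w")
      case True then show ?thesis using T2_ancs_w rt_reach[OF rtT2 br_parts(2)] by simp
    next
      case False
      then have xV: "x \<in> bV T" using x by (simp add: T2_simps)
      show ?thesis using T2_ancs_old[OF xV] rt_reach[OF rtT2 xV] by simp
    qed
    then have "broot T' \<in> ancs T' x" by (simp add: T2_simps)
    then show "\<exists>n. (bpar T' ^^ n) x = broot T'" by (simp only: reach_iff)
  qed
next
  fix x assume x: "x \<in> bV T'" and nl: "\<not> is_leaf T' x"
  have xw: "x \<noteq> w" using nl T2_leaf_w by auto
  then have xV: "x \<in> bV T" using x by (simp add: T2_simps)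
  have "\<not> is_leaf T x" using nl T2_leaf_old[OF xV] by simp
  then have "blb T x \<in> children T x" using bt xV unfolding burling_tree_def by blast
  then show "blb T' x \<in> children T' x" using T2_children_old[OF xV] by (cases "x = s") (simp_all add: T2_simps)
next
  fix z assume z: "z \<in> bV T'" and cond: "z \<noteq> broot T' \<and> \<not> is_last_born T' z"
  show "\<exists>xs. is_branch T' xs \<and> (xs \<noteq> [] \<longrightarrow> hd xs = blb T' (bpar T' z)) \<and> bc T' z = set xs"
  proof (cases "z = w")
    case True
    have "is_branch T' [a, v]"
      using br_parts(3,6,7) vbV vw by (simp add: is_branch_Cons2 T2_simps)
    moreover have "hd [a, v] = blb T' (bpar T' z)" using True las by (simp add: T2_simps)
    moreover have "bc T' z = set [a, v]" using True uw by (simp add: T2_simps)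
    ultimately show ?thesis by blast
  next
    case False
    note zw = False
    have zV: "z \<in> bV T" using z False by (simp add: T2_simps)
    show ?thesis
    proof (cases "z = u")
      case True
      have b1: "is_branch T' (ys @ [s])"
      proof (rule is_branch_transfer[OF br_parts(1)])
        show "set (ys @ [s]) \<subseteq> bV T'" using is_branch_set[OF br_parts(1)] by (auto simp: T2_simps)
        show "broot T' = broot T" by (simp add: T2_simps)
        show "\<forall>i. Suc i < length (ys @ [s]) \<longrightarrow> bpar T' ((ys @ [s]) ! Suc i) = bpar T ((ys @ [s]) ! Suc i)"
        proof (intro allI impI)
          fix i assume i: "Suc i < length (ys @ [s])"
          have "(ys @ [s]) ! Suc i \<in> bV T" using is_branch_set[OF br_parts(1)] i by (meson nth_mem subsetD)
          then have "(ys @ [s]) ! Suc i \<noteq> w" using wV by auto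
          then show "bpar T' ((ys @ [s]) ! Suc i) = bpar T ((ys @ [s]) ! Suc i)" by (simp add: T2_simps)
        qed
      qed
      have b2: "is_branch T' [w]" by (simp add: T2_simps)
      have "is_branch T' ((ys @ [s]) @ [w])"
        using is_branch_append[of T' "ys @ [s]" "[w]"] b1 b2 w_neq_root by (simp add: T2_simps)
      then have "is_branch T' (ys @ [s, w])" by simp
      moreover have "hd (ys @ [s, w]) = blb T' (bpar T' z)"
      proof -
        have "hd (ys @ [s, w]) = hd xs" using xsd by (cases ys) auto
        then show ?thesis using hdx True uw by (simp add: T2_simps)
      qed
      moreover have "bc T' z = set (ys @ [s, w])" using True by (simp add: T2_simps)
      ultimately show ?thesis by blast
    next
      case False
      have znr: "z \<noteq> broot T" using cond by (simp add: T2_simps)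
      have nlb: "\<not> is_last_born T z" using cond T2_lastborn[OF z] zw by simp
      obtain xs' where br': "is_branch T xs'" and hd': "xs' \<noteq> [] \<longrightarrow> hd xs' = blb T (bpar T z)"
        and cz: "bc T z = set xs'"
        using bt zV znr nlb unfolding burling_tree_def by blast
      have "is_branch T' xs'"
      proof (rule is_branch_transfer[OF br'])
        show "set xs' \<subseteq> bV T'" using is_branch_set[OF br'] by (auto simp: T2_simps)
        show "broot T' = broot T" by (simp add: T2_simps)
        show "\<forall>i. Suc i < length xs' \<longrightarrow> bpar T' (xs' ! Suc i) = bpar T (xs' ! Suc i)"
        proof (intro allI impI)
          fix i assume i: "Suc i < length xs'"
          have "xs' ! Suc i \<in> bV T" using is_branch_set[OF br'] i by (meson nth_mem subsetD)
          then have "xs' ! Suc i \<noteq> w" using wV by auto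
          then show "bpar T' (xs' ! Suc i) = bpar T (xs' ! Suc i)" by (simp add: T2_simps)
        qed
      qed
      moreover have "xs' \<noteq> [] \<longrightarrow> hd xs' = blb T' (bpar T' z)" using hd' zw by (simp add: T2_simps)
      moreover have "bc T' z = set xs'" using cz zw False by (simp add: T2_simps)
      ultimately show ?thesis by blast
    qed
  qed
next
  fix z assume z: "z \<in> bV T'" and cond: "z = broot T' \<or> is_last_born T' z"
  have zw: "z \<noteq> w" using cond T2_lastborn[OF z] w_neq_root by (auto simp: T2_simps)
  then have zV: "z \<in> bV T" using z by (simp add: T2_simps)
  have "z = broot T \<or> is_last_born T z" using cond T2_lastborn[OF z] by (auto simp: T2_simps)
  then have cz: "bc T z = {}" using bt zV unfolding burling_tree_def by blast
  then have "z \<noteq> u" using cu_ne by auto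
  then show "bc T' z = {}" using cz zw by (simp add: T2_simps)
qed


lemma E'_iff: "(x, y) \<in> subdiv_arcs E u v w \<longleftrightarrow> ((x, y) \<in> E \<and> (x, y) \<noteq> (u, v)) \<or> (x = u \<and> y = w) \<or> (x = w \<and> y = v)"
  by (auto simp: subdiv_arcs_def)

lemma T2_derived: "derived T' (insert w V) (subdiv_arcs E u v w)"
  unfolding derived_def
proof (intro conjI ballI)
  show "insert w V \<subseteq> bV T'" using VV by (auto simp: T2_simps)
  show "subdiv_arcs E u v w \<subseteq> insert w V \<times> insert w V"
    using EVV uV vV by (auto simp: subdiv_arcs_def)
  fix x y assume x: "x \<in> insert w V" and y: "y \<in> insert w V"
  have aw: "a \<noteq> w" using br_parts(3) wV by auto
  show "(x, y) \<in> subdiv_arcs E u v w \<longleftrightarrow> y \<in> bc T' x"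
  proof (cases "x = w")
    case True
    have "(w, y) \<notin> E" using EVV VV wV by auto
    then show ?thesis using True uw y aNV aw by (auto simp: E'_iff T2_simps)
  next
    case False
    then have xV: "x \<in> V" using x by simp
    show ?thesis
    proof (cases "x = u")
      case True
      show ?thesis
      proof (cases "y = w")
        case True then show ?thesis using \<open>x = u\<close> by (simp add: E'_iff T2_simps)
      next
        case False
        then have yV: "y \<in> V" using y by simp
        have "(x, y) \<in> subdiv_arcs E u v w \<longleftrightarrow> (y \<in> bc T u \<and> y \<noteq> v)"
          using \<open>x = u\<close> False uw derE[OF uV yV] by (auto simp: E'_iff)
        also have "\<dots> \<longleftrightarrow> y \<in> set (ys @ [s])" by (rule key_set[OF yV])
        also have "\<dots> \<longleftrightarrow> y \<in> bc T' x" using \<open>x = u\<close> False by (simp add: T2_simps)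
        finally show ?thesis .
      qed
    next
      case False
      note xu = False
      have cxV: "bc T x \<subseteq> bV T"
      proof -
        have xB: "x \<in> bV T" using xV VV by auto
        show ?thesis
        proof (cases "x = broot T \<or> is_last_born T x")
          case True then show ?thesis using bt xB unfolding burling_tree_def by blast
        next
          case False
          then obtain xs' where "is_branch T xs'" "bc T x = set xs'"
            using bt xB unfolding burling_tree_def by blast
          then show ?thesis using is_branch_set by blast
        qed
      qed
      show ?thesis
      proof (cases "y = w")
        case True
        then show ?thesis using xu \<open>x \<noteq> w\<close> cxV wV EVV VV by (auto simp: E'_iff T2_simps)
      next
        case False
        then have yV: "y \<in> V" using y by simp
        show ?thesis using xu \<open>x \<noteq> w\<close> False derE[OF xV yV] by (auto simp: E'_iff T2_simps)
      qed
    qed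
  qed
qed

lemma u_out: "(u, x) \<in> subdiv_arcs E u v w \<Longrightarrow> anc T' x w"
proof -
  assume H: "(u, x) \<in> subdiv_arcs E u v w"
  show "anc T' x w"
  proof (cases "x = w")
    case True then show ?thesis using T2_anc_w by simp
  next
    case False
    then have "(u, x) \<in> E" "x \<noteq> v" using H uw by (auto simp: E'_iff)
    moreover have xV: "x \<in> V" using \<open>(u, x) \<in> E\<close> EVV by auto
    ultimately have "x \<in> set (ys @ [s])" using key_set[OF xV] derE[OF uV xV] by simp
    then show ?thesis using pre_anc T2_anc_w by simp
  qed
qed

lemma op2_main:
  "burling_tree T' \<and> derived T' (insert w V) (subdiv_arcs E u v w)
     \<and> bottom_arc T' (subdiv_arcs E u v w) u w
     \<and> bottom_arc T' (subdiv_arcs E u v w) w v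
     \<and> top_arc T' (subdiv_arcs E u v w) w v
     \<and> (\<forall>x y. top_arc T E x y \<and> (x, y) \<noteq> (u, v) \<longrightarrow> top_arc T' (subdiv_arcs E u v w) x y)
     \<and> (\<forall>x y. bottom_arc T E x y \<and> (x, y) \<noteq> (u, v) \<longrightarrow> bottom_arc T' (subdiv_arcs E u v w) x y)"
proof (intro conjI allI impI)
  show "burling_tree T'" by (rule T2_burling)
  show "derived T' (insert w V) (subdiv_arcs E u v w)" by (rule T2_derived)
  show "bottom_arc T' (subdiv_arcs E u v w) u w"
    unfolding bottom_arc_def using u_out by (auto simp: E'_iff)
  have wout: "(w, x) \<in> subdiv_arcs E u v w \<longleftrightarrow> x = v" for x
    using EVV VV wV uw by (auto simp: E'_iff)
  have avv: "anc T' v v" by (simp add: anc_iff ancs.self)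
  show "bottom_arc T' (subdiv_arcs E u v w) w v" unfolding bottom_arc_def using wout avv by simp
  show "top_arc T' (subdiv_arcs E u v w) w v" unfolding top_arc_def using wout avv by simp
next
  fix x y assume H: "top_arc T E x y \<and> (x, y) \<noteq> (u, v)"
  then have xy: "(x, y) \<in> E" and all: "\<And>z. (x, z) \<in> E \<Longrightarrow> anc T y z" by (auto simp: top_arc_def)
  have xV: "x \<in> V" and yV: "y \<in> V" using xy EVV by auto
  have xw: "x \<noteq> w" using xV VV wV by auto
  show "top_arc T' (subdiv_arcs E u v w) x y"
    unfolding top_arc_def
  proof (intro conjI allI impI)
    show "(x, y) \<in> subdiv_arcs E u v w" using xy H by (simp add: E'_iff)
    fix z assume z: "(x, z) \<in> subdiv_arcs E u v w"
    show "anc T' y z"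
    proof (cases "z = w")
      case True
      have "(x, w) \<notin> E" using EVV VV wV by auto
      then have xu: "x = u" using z xw True by (auto simp: E'_iff)
      then have "y \<noteq> v" using H by simp
      then have "(u, y) \<in> subdiv_arcs E u v w" using xy xu by (simp add: E'_iff)
      from u_out[OF this] True show ?thesis by simp
    next
      case False
      then have "(x, z) \<in> E" using z xw by (auto simp: E'_iff)
      then have "anc T y z" "z \<in> V" using all EVV by auto
      then show ?thesis using T2_anc_old VV by auto
    qed
  qed
next
  fix x y assume H: "bottom_arc T E x y \<and> (x, y) \<noteq> (u, v)"
  then have xy: "(x, y) \<in> E" and all: "\<And>z. (x, z) \<in> E \<Longrightarrow> anc T z y" by (auto simp: bottom_arc_def)
  have xV: "x \<in> V" and yV: "y \<in> V" using xy EVV by auto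
  have xw: "x \<noteq> w" using xV VV wV by auto
  have xu: "x \<noteq> u"
  proof
    assume xu: "x = u"
    then have "y \<noteq> v" using H by simp
    have "anc T v y" using all uvE xu by simp
    moreover have "anc T y v" using bot xy xu by (simp add: bottom_arc_def)
    ultimately have "y = v" using anc_antisym[OF rtT2 vbV] by (simp add: anc_iff)
    with \<open>y \<noteq> v\<close> show False by simp
  qed
  show "bottom_arc T' (subdiv_arcs E u v w) x y"
    unfolding bottom_arc_def
  proof (intro conjI allI impI)
    show "(x, y) \<in> subdiv_arcs E u v w" using xy H by (simp add: E'_iff)
    fix z assume z: "(x, z) \<in> subdiv_arcs E u v w"
    then have "(x, z) \<in> E" using xw xu by (auto simp: E'_iff)
    then have "anc T z y" using all by simp
    then show "anc T' z y" using T2_anc_old yV VV by auto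
  qed
qed

end



definition ren :: "('a \<Rightarrow> 'a) \<Rightarrow> 'a btree \<Rightarrow> 'a btree" where
 "ren \<sigma> T = \<lparr>bV = \<sigma> ` bV T, broot = \<sigma> (broot T), bpar = \<sigma> \<circ> bpar T \<circ> \<sigma>,
    blb = \<sigma> \<circ> blb T \<circ> \<sigma>, bc = (\<lambda>x. \<sigma> ` bc T (\<sigma> x))\<rparr>"

context
  fixes \<sigma> :: "'a \<Rightarrow> 'a"
  assumes inv: "\<And>x. \<sigma> (\<sigma> x) = x"
begin


lemma sig_swap: "\<sigma> x = y \<longleftrightarrow> x = \<sigma> y"
proof
  assume "\<sigma> x = y" then have "\<sigma> (\<sigma> x) = \<sigma> y" by simp
  then show "x = \<sigma> y" using inv by simp
next
  assume "x = \<sigma> y" then show "\<sigma> x = y" using inv by simp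
qed

lemma sig_inj: "\<sigma> x = \<sigma> y \<longleftrightarrow> x = y"
proof
  assume "\<sigma> x = \<sigma> y" then have "\<sigma> (\<sigma> x) = \<sigma> (\<sigma> y)" by simp
  then show "x = y" by (simp add: inv)
qed simp

lemma all_sig: "(\<forall>z. P (\<sigma> z)) \<longleftrightarrow> (\<forall>z. P z)"
proof
  assume H: "\<forall>z. P (\<sigma> z)"
  show "\<forall>z. P z"
  proof
    fix z have "P (\<sigma> (\<sigma> z))" using H by blast
    then show "P z" using inv by simp
  qed
qed simp

lemma sig_mem2: "x \<in> \<sigma> ` A \<longleftrightarrow> \<sigma> x \<in> A"
proof
  assume "x \<in> \<sigma> ` A" then obtain y where "y \<in> A" "x = \<sigma> y" by blast
  then show "\<sigma> x \<in> A" using inv by simp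
next
  assume "\<sigma> x \<in> A" then have "\<sigma> (\<sigma> x) \<in> \<sigma> ` A" by (rule imageI)
  then show "x \<in> \<sigma> ` A" using inv by simp
qed

lemma sig_mem: "\<sigma> x \<in> \<sigma> ` A \<longleftrightarrow> x \<in> A" using sig_mem2 inv by simp

lemma img_sub: "\<sigma> ` A \<subseteq> B \<longleftrightarrow> A \<subseteq> \<sigma> ` B"
  unfolding subset_iff sig_mem2 by (metis inv)

lemma R_simps:
  "bV (ren \<sigma> T) = \<sigma> ` bV T" "broot (ren \<sigma> T) = \<sigma> (broot T)"
  "bpar (ren \<sigma> T) x = \<sigma> (bpar T (\<sigma> x))" "blb (ren \<sigma> T) x = \<sigma> (blb T (\<sigma> x))"
  "bc (ren \<sigma> T) x = \<sigma> ` bc T (\<sigma> x)"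
  by (simp_all add: ren_def)

lemma R_ancs: "x \<in> ancs (ren \<sigma> T) y \<longleftrightarrow> \<sigma> x \<in> ancs T (\<sigma> y)"
proof
  assume "x \<in> ancs (ren \<sigma> T) y"
  then show "\<sigma> x \<in> ancs T (\<sigma> y)"
  proof induction
    case self then show ?case by (rule ancs.self)
  next
    case (up z)
    have "\<sigma> z \<noteq> broot T" using up.hyps(2) by (metis R_simps(2) inv)
    with up.IH have "bpar T (\<sigma> z) \<in> ancs T (\<sigma> y)" by (rule ancs.up)
    then show ?case by (simp add: R_simps inv)
  qed
next
  assume "\<sigma> x \<in> ancs T (\<sigma> y)"
  then have "\<sigma> (\<sigma> x) \<in> ancs (ren \<sigma> T) y"
  proof induction
    case self then show ?case by (simp add: inv ancs.self)
  next
    case (up z)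
    have "\<sigma> z \<noteq> broot (ren \<sigma> T)" using up.hyps(2) by (simp add: R_simps sig_inj)
    with up.IH have "bpar (ren \<sigma> T) (\<sigma> z) \<in> ancs (ren \<sigma> T) y" by (rule ancs.up)
    then show ?case by (simp add: R_simps inv)
  qed
  then show "x \<in> ancs (ren \<sigma> T) y" by (simp add: inv)
qed

lemma R_anc: "anc (ren \<sigma> T) x y \<longleftrightarrow> anc T (\<sigma> x) (\<sigma> y)"
  by (simp add: anc_iff R_ancs)

lemma R_children: "children (ren \<sigma> T) x = \<sigma> ` children T (\<sigma> x)"
proof -
  have "v \<in> children (ren \<sigma> T) x \<longleftrightarrow> \<sigma> v \<in> children T (\<sigma> x)" for v
  proof -
    have e1: "(v \<noteq> \<sigma> (broot T)) \<longleftrightarrow> (\<sigma> v \<noteq> broot T)" using sig_swap[of v "broot T"] by simp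
    have e2: "(\<sigma> (bpar T (\<sigma> v)) = x) \<longleftrightarrow> (bpar T (\<sigma> v) = \<sigma> x)" by (rule sig_swap)
    show ?thesis unfolding children_def R_simps mem_Collect_eq sig_mem2 e1 e2 ..
  qed
  then show ?thesis by (simp add: set_eq_iff sig_mem2)
qed

lemma R_leaf: "is_leaf (ren \<sigma> T) x \<longleftrightarrow> is_leaf T (\<sigma> x)"
  by (simp add: is_leaf_def R_children)

lemma R_lastborn: "is_last_born (ren \<sigma> T) x \<longleftrightarrow> is_last_born T (\<sigma> x)"
proof
  assume "is_last_born (ren \<sigma> T) x"
  then obtain y where "y \<in> bV (ren \<sigma> T)" "\<not> is_leaf (ren \<sigma> T) y" "blb (ren \<sigma> T) y = x"
    unfolding is_last_born_def by blast
  then have "\<sigma> y \<in> bV T" "\<not> is_leaf T (\<sigma> y)" "blb T (\<sigma> y) = \<sigma> x"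
    by (auto simp: R_simps sig_mem2 R_leaf inv)
  then show "is_last_born T (\<sigma> x)" unfolding is_last_born_def by blast
next
  assume "is_last_born T (\<sigma> x)"
  then obtain y where "y \<in> bV T" "\<not> is_leaf T y" "blb T y = \<sigma> x"
    unfolding is_last_born_def by blast
  then have "\<sigma> y \<in> bV (ren \<sigma> T)" "\<not> is_leaf (ren \<sigma> T) (\<sigma> y)" "blb (ren \<sigma> T) (\<sigma> y) = x"
    by (auto simp: R_simps sig_mem R_leaf inv)
  then show "is_last_born (ren \<sigma> T) x" unfolding is_last_born_def by blast
qed

lemma R_branch: "is_branch (ren \<sigma> T) xs \<longleftrightarrow> is_branch T (map \<sigma> xs)"
proof -
  have "set xs \<subseteq> \<sigma> ` bV T \<longleftrightarrow> set (map \<sigma> xs) \<subseteq> bV T" by (simp add: img_sub)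
  moreover have "(xs ! Suc i \<noteq> \<sigma> (broot T) \<and> \<sigma> (bpar T (\<sigma> (xs ! Suc i))) = xs ! i) \<longleftrightarrow>
      (\<sigma> (xs ! Suc i) \<noteq> broot T \<and> bpar T (\<sigma> (xs ! Suc i)) = \<sigma> (xs ! i))" for i
    by (metis inv)
  ultimately show ?thesis unfolding is_branch_def R_simps by auto
qed

lemma R_burling:
  assumes bt: "burling_tree T"
  shows "burling_tree (ren \<sigma> T)"
  unfolding burling_tree_def
proof (intro conjI ballI impI)
  have rt: "rt T" using bt by (simp add: burling_tree_def)
  show "rt (ren \<sigma> T)"
    unfolding rooted_tree_def
  proof (intro conjI ballI)
    show "finite (bV (ren \<sigma> T))" using rt by (simp add: rooted_tree_def R_simps)
    show "broot (ren \<sigma> T) \<in> bV (ren \<sigma> T)" using rt by (simp add: rooted_tree_def R_simps sig_mem)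
    fix x assume x: "x \<in> bV (ren \<sigma> T) - {broot (ren \<sigma> T)}"
    then have "\<sigma> x \<in> bV T" "\<sigma> x \<noteq> broot T" by (auto simp: R_simps sig_mem2 inv sig_swap)
    then show "bpar (ren \<sigma> T) x \<in> bV (ren \<sigma> T)" using rt_par[OF rt] by (simp add: R_simps sig_mem inv)
  next
    fix x assume x: "x \<in> bV (ren \<sigma> T)"
    then have "\<sigma> x \<in> bV T" by (simp add: R_simps sig_mem2)
    then have "broot T \<in> ancs T (\<sigma> x)" by (rule rt_reach[OF rt])
    then have "broot (ren \<sigma> T) \<in> ancs (ren \<sigma> T) x" by (simp add: R_ancs R_simps inv)
    then show "\<exists>n. (bpar (ren \<sigma> T) ^^ n) x = broot (ren \<sigma> T)" by (simp only: reach_iff)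
  qed
next
  fix x assume x: "x \<in> bV (ren \<sigma> T)" and nl: "\<not> is_leaf (ren \<sigma> T) x"
  then have "\<sigma> x \<in> bV T" "\<not> is_leaf T (\<sigma> x)" by (simp_all add: R_simps sig_mem2 R_leaf)
  then have "blb T (\<sigma> x) \<in> children T (\<sigma> x)" using bt unfolding burling_tree_def by blast
  then show "blb (ren \<sigma> T) x \<in> children (ren \<sigma> T) x" by (simp add: R_simps R_children sig_mem)
next
  fix x assume x: "x \<in> bV (ren \<sigma> T)" and c: "x \<noteq> broot (ren \<sigma> T) \<and> \<not> is_last_born (ren \<sigma> T) x"
  then have "\<sigma> x \<in> bV T" "\<sigma> x \<noteq> broot T" "\<not> is_last_born T (\<sigma> x)"
    by (auto simp: R_simps sig_mem2 R_lastborn inv sig_swap)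
  then obtain xs where xs: "is_branch T xs" "xs \<noteq> [] \<longrightarrow> hd xs = blb T (bpar T (\<sigma> x))" "bc T (\<sigma> x) = set xs"
    using bt unfolding burling_tree_def by blast
  have "map \<sigma> (map \<sigma> xs) = xs" by (simp add: inv map_idI)
  then have "is_branch (ren \<sigma> T) (map \<sigma> xs)" using xs(1) by (simp add: R_branch)
  moreover have "map \<sigma> xs \<noteq> [] \<longrightarrow> hd (map \<sigma> xs) = blb (ren \<sigma> T) (bpar (ren \<sigma> T) x)"
    using xs(2) by (auto simp: R_simps inv hd_map)
  moreover have "bc (ren \<sigma> T) x = set (map \<sigma> xs)" using xs(3) by (simp add: R_simps)
  ultimately show "\<exists>xs. is_branch (ren \<sigma> T) xs \<and> (xs \<noteq> [] \<longrightarrow> hd xs = blb (ren \<sigma> T) (bpar (ren \<sigma> T) x))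
     \<and> bc (ren \<sigma> T) x = set xs" by blast
next
  fix x assume x: "x \<in> bV (ren \<sigma> T)" and c: "x = broot (ren \<sigma> T) \<or> is_last_born (ren \<sigma> T) x"
  then have "\<sigma> x \<in> bV T" "\<sigma> x = broot T \<or> is_last_born T (\<sigma> x)"
    by (auto simp: R_simps sig_mem2 R_lastborn inv)
  then have "bc T (\<sigma> x) = {}" using bt unfolding burling_tree_def by blast
  then show "bc (ren \<sigma> T) x = {}" by (simp add: R_simps)
qed

definition "pimg E = (\<lambda>(x, y). (\<sigma> x, \<sigma> y)) ` E"

lemma pimg_mem: "(x, y) \<in> pimg E \<longleftrightarrow> (\<sigma> x, \<sigma> y) \<in> E"
  unfolding pimg_def by (force simp: inv)

lemma R_derived:
  assumes "derived T V E"
  shows "derived (ren \<sigma> T) (\<sigma> ` V) (pimg E)"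
  unfolding derived_def
proof (intro conjI ballI)
  show "\<sigma> ` V \<subseteq> bV (ren \<sigma> T)" using assms by (auto simp: derived_def R_simps)
  show "pimg E \<subseteq> \<sigma> ` V \<times> \<sigma> ` V" using assms by (auto simp: derived_def pimg_def)
  fix x y assume "x \<in> \<sigma> ` V" "y \<in> \<sigma> ` V"
  then have "\<sigma> x \<in> V" "\<sigma> y \<in> V" by (simp_all add: sig_mem2)
  then show "(x, y) \<in> pimg E \<longleftrightarrow> y \<in> bc (ren \<sigma> T) x"
    using assms by (simp add: derived_def pimg_mem R_simps sig_mem2)
qed

lemma R_top: "top_arc (ren \<sigma> T) (pimg E) x y \<longleftrightarrow> top_arc T E (\<sigma> x) (\<sigma> y)"
  unfolding top_arc_def pimg_mem R_anc using all_sig[of "\<lambda>z. (\<sigma> x, z) \<in> E \<longrightarrow> anc T (\<sigma> y) z"] by simp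

lemma R_bottom: "bottom_arc (ren \<sigma> T) (pimg E) x y \<longleftrightarrow> bottom_arc T E (\<sigma> x) (\<sigma> y)"
  unfolding bottom_arc_def pimg_mem R_anc using all_sig[of "\<lambda>z. (\<sigma> x, z) \<in> E \<longrightarrow> anc T z (\<sigma> y)"] by simp

end


lemma main_fresh:
  assumes bt: "burling_tree T" and og: "oriented_graph V E" and der: "derived T V E"
    and bot: "bottom_arc T E u v" and wV: "w \<notin> bV T"
    and a1F: "a1 \<notin> insert w (bV T)" and a2F: "a2 \<notin> insert a1 (insert w (bV T))"
  shows "\<exists>T'. burling_tree T' \<and> derived T' (insert w V) (subdiv_arcs E u v w)
     \<and> bottom_arc T' (subdiv_arcs E u v w) u w
     \<and> bottom_arc T' (subdiv_arcs E u v w) w v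
     \<and> top_arc T' (subdiv_arcs E u v w) w v
     \<and> (\<forall>a b. top_arc T E a b \<and> (a, b) \<noteq> (u, v) \<longrightarrow> top_arc T' (subdiv_arcs E u v w) a b)
     \<and> (\<forall>a b. bottom_arc T E a b \<and> (a, b) \<noteq> (u, v) \<longrightarrow> bottom_arc T' (subdiv_arcs E u v w) a b)"
proof -
  have rt: "rt T" using bt by (simp add: burling_tree_def)
  have VV: "V \<subseteq> bV T" and EVV: "E \<subseteq> V \<times> V" using der by (simp_all add: derived_def)
  have uvE: "(u, v) \<in> E" using bot by (simp add: bottom_arc_def)
  have uV: "u \<in> V" and vV: "v \<in> V" using uvE EVV by auto
  have uv: "u \<noteq> v" using og uvE by (auto simp: oriented_graph_def)
  have vcu: "v \<in> bc T u" using der uV vV uvE by (simp add: derived_def)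
  have uB: "u \<in> bV T" using uV VV by auto
  have vB: "v \<in> bV T" using vV VV by auto
  have "\<not> (u = broot T \<or> is_last_born T u)"
    using bt uB vcu unfolding burling_tree_def by blast
  then have unr: "u \<noteq> broot T" and unlb: "\<not> is_last_born T u" by auto
  obtain xs where br: "is_branch T xs" and hd: "xs \<noteq> [] \<longrightarrow> hd xs = blb T (bpar T u)"
    and cux: "bc T u = set xs"
    using bt uB unr unlb unfolding burling_tree_def by blast
  have vin: "v \<in> set xs" using vcu cux by simp
  have vnr: "v \<noteq> broot T"
  proof -
    obtain j where j: "j < length xs" "xs ! j = v" using vin by (meson in_set_conv_nth)
    show ?thesis
    proof (cases j)
      case 0
      have xne: "xs \<noteq> []" using vin by auto
      then have "v = blb T (bpar T u)" using hd j 0 by (simp add: hd_conv_nth)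
      moreover have puB: "bpar T u \<in> bV T" using rt_par[OF rt uB unr] .
      moreover have "u \<in> children T (bpar T u)" using uB unr by (simp add: children_def)
      then have "\<not> is_leaf T (bpar T u)" by (auto simp: is_leaf_def)
      ultimately have "v \<in> children T (bpar T u)" using bt unfolding burling_tree_def by blast
      then show ?thesis by (simp add: children_def)
    next
      case (Suc j')
      then show ?thesis using br j unfolding is_branch_def by blast
    qed
  qed
  define q where "q = bpar T v"
  have qB: "q \<in> bV T" unfolding q_def using rt_par[OF rt vB vnr] .
  have vch: "v \<in> children T q" using vB vnr by (simp add: children_def q_def)
  then have qnl: "\<not> is_leaf T q" by (auto simp: is_leaf_def)
  then have lq: "blb T q \<in> children T q" using bt qB unfolding burling_tree_def by blast
  define M1 where "M1 = children T q - {u}"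
  have lqu: "blb T q \<noteq> u" using unlb qB qnl unfolding is_last_born_def by blast
  have lqM: "blb T q \<in> M1" using lq lqu by (simp add: M1_def)
  have vM: "v \<in> M1" using vch uv by (simp add: M1_def)
  have uM: "u \<notin> M1" by (simp add: M1_def)
  have M1C: "M1 \<subseteq> children T q" by (auto simp: M1_def)
  have M1B: "M1 \<subseteq> bV T" using M1C by (auto simp: children_def)
  have a1B: "a1 \<notin> bV T" using a1F by simp
  define T1 where "T1 = op1 T q M1 a1"
  have bt1: "burling_tree T1" unfolding T1_def by (rule T1_burling[OF bt qB M1C lqM a1B])
  have der1: "derived T1 V E" unfolding T1_def by (rule T1_derived[OF bt qB M1C lqM a1B der])
  have top1: "top_arc T1 E x y \<longleftrightarrow> top_arc T E x y" for x y
    unfolding T1_def by (rule T1_top[OF bt qB M1C lqM a1B VV EVV])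
  have bottom1: "bottom_arc T1 E x y \<longleftrightarrow> bottom_arc T E x y" for x y
    unfolding T1_def by (rule T1_bottom[OF bt qB M1C lqM a1B VV EVV])
  have L1: "is_branch T1 (fins M1 a1 xs)
    \<and> (fins M1 a1 xs \<noteq> [] \<longrightarrow> hd (fins M1 a1 xs) = blb T1 (bpar T1 u))
    \<and> bc T1 u = set (fins M1 a1 xs)"
    unfolding T1_def by (rule T1_branch_notM[OF bt qB M1C lqM a1B uB unr uM br hd cux])
  have a1q: "a1 \<noteq> q" using a1B qB by auto
  have a1B1: "a1 \<in> bV T1" by (simp add: T1_def op1_def)
  have M1C1: "M1 \<subseteq> children T1 a1"
    using T1_children[OF bt qB M1C lqM a1B, of a1] a1q by (simp add: T1_def op1_def)
  have lqM1: "blb T1 a1 \<in> M1" using lqM a1q by (simp add: T1_def op1_def)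
  have a2B1: "a2 \<notin> bV T1" using a2F by (simp add: T1_def op1_def)
  have uB1: "u \<in> bV T1" using uB by (simp add: T1_def op1_def)
  have unr1: "u \<noteq> broot T1" using unr by (simp add: T1_def op1_def)
  define T2 where "T2 = op1 T1 a1 M1 a2"
  have VV1: "V \<subseteq> bV T1" using VV by (auto simp: T1_def op1_def)
  have bt2: "burling_tree T2" unfolding T2_def by (rule T1_burling[OF bt1 a1B1 M1C1 lqM1 a2B1])
  have der2: "derived T2 V E" unfolding T2_def by (rule T1_derived[OF bt1 a1B1 M1C1 lqM1 a2B1 der1])
  have top2: "top_arc T2 E x y \<longleftrightarrow> top_arc T1 E x y" for x y
    unfolding T2_def by (rule T1_top[OF bt1 a1B1 M1C1 lqM1 a2B1 VV1 EVV])
  have bottom2: "bottom_arc T2 E x y \<longleftrightarrow> bottom_arc T1 E x y" for x y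
    unfolding T2_def by (rule T1_bottom[OF bt1 a1B1 M1C1 lqM1 a2B1 VV1 EVV])
  have L1b: "is_branch T1 (fins M1 a1 xs)" and L1h: "fins M1 a1 xs \<noteq> [] \<longrightarrow> hd (fins M1 a1 xs) = blb T1 (bpar T1 u)"
    and L1c: "bc T1 u = set (fins M1 a1 xs)" using L1 by auto
  have L2: "is_branch T2 (fins M1 a2 (fins M1 a1 xs))
    \<and> (fins M1 a2 (fins M1 a1 xs) \<noteq> [] \<longrightarrow> hd (fins M1 a2 (fins M1 a1 xs)) = blb T2 (bpar T2 u))
    \<and> bc T2 u = set (fins M1 a2 (fins M1 a1 xs))"
    unfolding T2_def by (rule T1_branch_notM[OF bt1 a1B1 M1C1 lqM1 a2B1 uB1 unr1 uM L1b L1h L1c])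
  obtain xs1 xs2 where xsd: "xs = xs1 @ v # xs2" using vin by (meson split_list)
  have a1M: "a1 \<notin> M1" using M1B a1B by auto
  define ys where "ys = fins M1 a2 (fins M1 a1 xs1)"
  define zs where "zs = fins M1 a2 (fins M1 a1 xs2)"
  have L2d: "fins M1 a2 (fins M1 a1 xs) = ys @ [a1, a2, v] @ zs"
    using xsd vM a1M by (simp add: ys_def zs_def)
  have brL: "is_branch T2 (fins M1 a2 (fins M1 a1 xs))" using L2 by simp
  have hdL: "hd (fins M1 a2 (fins M1 a1 xs)) = blb T2 (bpar T2 u)" using L2 L2d by simp
  have cuL: "bc T2 u = set (fins M1 a2 (fins M1 a1 xs))" using L2 by simp
  have las: "blb T2 a1 = a2" by (simp add: T2_def op1_def)
  have a2NV: "a2 \<notin> V" using a2F VV by auto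
  have wV2: "w \<notin> bV T2" using wV a1F a2F by (auto simp: T2_def T1_def op1_def)
  have bot2: "bottom_arc T2 E u v" using bot bottom1 bottom2 by simp
  define T3 where "T3 = op2 T2 u w a1 a2 v ys"
  have R: "burling_tree T3 \<and> derived T3 (insert w V) (subdiv_arcs E u v w)
     \<and> bottom_arc T3 (subdiv_arcs E u v w) u w
     \<and> bottom_arc T3 (subdiv_arcs E u v w) w v
     \<and> top_arc T3 (subdiv_arcs E u v w) w v
     \<and> (\<forall>x y. top_arc T2 E x y \<and> (x, y) \<noteq> (u, v) \<longrightarrow> top_arc T3 (subdiv_arcs E u v w) x y)
     \<and> (\<forall>x y. bottom_arc T2 E x y \<and> (x, y) \<noteq> (u, v) \<longrightarrow> bottom_arc T3 (subdiv_arcs E u v w) x y)"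
    unfolding T3_def
    by (rule op2_main[OF bt2 der2 bot2 brL hdL cuL L2d las a2NV wV2])
  then show ?thesis unfolding top2 top1 bottom2 bottom1 by blast
qed


lemma subdiv_iff: "(x, y) \<in> subdiv_arcs E u v w \<longleftrightarrow> ((x, y) \<in> E \<and> \<not> (x = u \<and> y = v)) \<or> (x = u \<and> y = w) \<or> (x = w \<and> y = v)"
  by (auto simp: subdiv_arcs_def)

theorem lemma3p6:
  fixes T :: "'a btree" and V :: "'a set" and E :: "('a \<times> 'a) set" and u v w :: 'a
  assumes "infinite (UNIV :: 'a set)"
    and "burling_tree T"
    and "oriented_graph V E"
    and "derived T V E"
    and "bottom_arc T E u v"
    and "w \<notin> V"
  shows "\<exists>T'. burling_tree T' \<and> derived T' (insert w V) (subdiv_arcs E u v w)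
     \<and> bottom_arc T' (subdiv_arcs E u v w) u w
     \<and> bottom_arc T' (subdiv_arcs E u v w) w v
     \<and> top_arc T' (subdiv_arcs E u v w) w v
     \<and> (\<forall>a b. top_arc T E a b \<and> (a, b) \<noteq> (u, v) \<longrightarrow> top_arc T' (subdiv_arcs E u v w) a b)
     \<and> (\<forall>a b. bottom_arc T E a b \<and> (a, b) \<noteq> (u, v) \<longrightarrow> bottom_arc T' (subdiv_arcs E u v w) a b)"
proof -
  note inf = assms(1) and bt = assms(2) and og = assms(3) and der = assms(4) and bot = assms(5)
    and wNV = assms(6)
  have fin: "finite (bV T)" using bt by (simp add: burling_tree_def rooted_tree_def)
  obtain w0 where w0: "w0 \<notin> insert w (bV T)" using ex_new_if_finite[OF inf, of "insert w (bV T)"] fin by auto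
  obtain a1 where a1: "a1 \<notin> insert w0 (bV T)" using ex_new_if_finite[OF inf, of "insert w0 (bV T)"] fin by auto
  obtain a2 where a2: "a2 \<notin> insert a1 (insert w0 (bV T))"
    using ex_new_if_finite[OF inf, of "insert a1 (insert w0 (bV T))"] fin by auto
  have w0B: "w0 \<notin> bV T" using w0 by simp
  obtain T' where T':
    "burling_tree T'" "derived T' (insert w0 V) (subdiv_arcs E u v w0)"
     "bottom_arc T' (subdiv_arcs E u v w0) u w0"
     "bottom_arc T' (subdiv_arcs E u v w0) w0 v"
     "top_arc T' (subdiv_arcs E u v w0) w0 v"
     "\<forall>a b. top_arc T E a b \<and> (a, b) \<noteq> (u, v) \<longrightarrow> top_arc T' (subdiv_arcs E u v w0) a b"
     "\<forall>a b. bottom_arc T E a b \<and> (a, b) \<noteq> (u, v) \<longrightarrow> bottom_arc T' (subdiv_arcs E u v w0) a b"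
    using main_fresh[OF bt og der bot w0B a1 a2] by blast
  define \<sigma> where "\<sigma> = (\<lambda>x. if x = w then w0 else if x = w0 then w else x)"
  have ww0: "w \<noteq> w0" using w0 by auto
  have inv: "\<And>x. \<sigma> (\<sigma> x) = x" using ww0 by (simp add: \<sigma>_def)
  have VV: "V \<subseteq> bV T" and EVV: "E \<subseteq> V \<times> V" using der by (simp_all add: derived_def)
  have fixV: "x \<in> V \<Longrightarrow> \<sigma> x = x" for x using wNV w0B VV by (auto simp: \<sigma>_def)
  have uvE: "(u, v) \<in> E" using bot by (simp add: bottom_arc_def)
  have uV: "u \<in> V" and vV: "v \<in> V" using uvE EVV by auto
  have su: "\<sigma> u = u" and sv: "\<sigma> v = v" using fixV uV vV by auto
  have sw: "\<sigma> w = w0" by (simp add: \<sigma>_def)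
  have sw0: "\<sigma> w0 = w" using ww0 by (simp add: \<sigma>_def)
  have Vimg: "\<sigma> ` insert w0 V = insert w V"
  proof -
    have "\<sigma> ` V = id ` V" by (rule image_cong) (simp_all add: fixV)
    then have "\<sigma> ` V = V" by simp
    then show ?thesis using sw0 by simp
  qed
  have Eimg: "pimg \<sigma> (subdiv_arcs E u v w0) = subdiv_arcs E u v w"
  proof (rule set_eqI)
    fix p :: "'a \<times> 'a"
    obtain x y where p: "p = (x, y)" by (cases p)
    have Eiff: "(\<sigma> x, \<sigma> y) \<in> E \<longleftrightarrow> (x, y) \<in> E"
    proof
      assume "(\<sigma> x, \<sigma> y) \<in> E"
      then have "\<sigma> x \<in> V" "\<sigma> y \<in> V" using EVV by auto
      then have "\<sigma> (\<sigma> x) = \<sigma> x" "\<sigma> (\<sigma> y) = \<sigma> y" using fixV by auto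
      then have "\<sigma> x = x" "\<sigma> y = y" using inv by auto
      then show "(x, y) \<in> E" using \<open>(\<sigma> x, \<sigma> y) \<in> E\<close> by simp
    next
      assume "(x, y) \<in> E"
      then have "x \<in> V" "y \<in> V" using EVV by auto
      then show "(\<sigma> x, \<sigma> y) \<in> E" using fixV \<open>(x, y) \<in> E\<close> by simp
    qed
    have swp: "\<sigma> a = b \<longleftrightarrow> a = \<sigma> b" for a b using sig_swap[of \<sigma>, OF inv, of a b] .
    have xu: "\<sigma> x = u \<longleftrightarrow> x = u" using swp[of x u] su by simp
    have yv: "\<sigma> y = v \<longleftrightarrow> y = v" using swp[of y v] sv by simp
    have yw: "\<sigma> y = w0 \<longleftrightarrow> y = w" using swp[of y w0] sw0 by simp
    have xw: "\<sigma> x = w0 \<longleftrightarrow> x = w" using swp[of x w0] sw0 by simp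
    have "(\<sigma> x, \<sigma> y) \<in> subdiv_arcs E u v w0 \<longleftrightarrow> (x, y) \<in> subdiv_arcs E u v w"
      unfolding subdiv_iff Eiff prod.inject xu yv yw xw by (rule refl)
    then show "p \<in> pimg \<sigma> (subdiv_arcs E u v w0) \<longleftrightarrow> p \<in> subdiv_arcs E u v w"
      using p pimg_mem[of \<sigma>, OF inv] by simp
  qed
  define T'' where "T'' = ren \<sigma> T'"
  have "burling_tree T''" unfolding T''_def by (rule R_burling[OF inv T'(1)])
  moreover have "derived T'' (insert w V) (subdiv_arcs E u v w)"
    using R_derived[of \<sigma>, OF inv T'(2)] unfolding T''_def Vimg Eimg .
  moreover have "bottom_arc T'' (subdiv_arcs E u v w) u w"
    using R_bottom[of \<sigma>, OF inv, of T' "subdiv_arcs E u v w0" u w] T'(3) su sw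
    unfolding T''_def Eimg by simp
  moreover have "bottom_arc T'' (subdiv_arcs E u v w) w v"
    using R_bottom[of \<sigma>, OF inv, of T' "subdiv_arcs E u v w0" w v] T'(4) sv sw
    unfolding T''_def Eimg by simp
  moreover have "top_arc T'' (subdiv_arcs E u v w) w v"
    using R_top[of \<sigma>, OF inv, of T' "subdiv_arcs E u v w0" w v] T'(5) sv sw
    unfolding T''_def Eimg by simp
  moreover have "\<forall>a b. top_arc T E a b \<and> (a, b) \<noteq> (u, v) \<longrightarrow> top_arc T'' (subdiv_arcs E u v w) a b"
  proof (intro allI impI)
    fix a b assume H: "top_arc T E a b \<and> (a, b) \<noteq> (u, v)"
    then have "(a, b) \<in> E" by (simp add: top_arc_def)
    then have "\<sigma> a = a" "\<sigma> b = b" using EVV fixV by auto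
    then show "top_arc T'' (subdiv_arcs E u v w) a b"
      using R_top[of \<sigma>, OF inv, of T' "subdiv_arcs E u v w0" a b] T'(6) H
      unfolding T''_def Eimg by simp
  qed
  moreover have "\<forall>a b. bottom_arc T E a b \<and> (a, b) \<noteq> (u, v) \<longrightarrow> bottom_arc T'' (subdiv_arcs E u v w) a b"
  proof (intro allI impI)
    fix a b assume H: "bottom_arc T E a b \<and> (a, b) \<noteq> (u, v)"
    then have "(a, b) \<in> E" by (simp add: bottom_arc_def)
    then have "\<sigma> a = a" "\<sigma> b = b" using EVV fixV by auto
    then show "bottom_arc T'' (subdiv_arcs E u v w) a b"
      using R_bottom[of \<sigma>, OF inv, of T' "subdiv_arcs E u v w0" a b] T'(7) H
      unfolding T''_def Eimg by simp
  qed
  ultimately show ?thesis by blast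
qed

end
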